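(* Let $\mu,\nu$ be Radon measures on $\mathbb R^d$ without common atoms, let $1<p<\infty$, and let $K\in L^2_{\mathrm{loc}}(\mu\times\nu)$ (locally square integrable on all of $\mathbb R^d\times\mathbb R^d$, including near the diagonal) be $L^p(\mu)\to L^p(\nu)$ restrictedly bounded with restricted norm $C$. Then the integral operator $Tf(x)=\int K(x,y)f(y)\,d\mu(y)$, defined for bounded compactly supported $f$, satisfies $\|Tf\|_{L^p(\nu)}\le 2C\|f\|_{L^p(\mu)}$, so it extends to a bounded operator $L^p(\mu)\to L^p(\nu)$ of norm at most $2C$.
   Context: $K$ is $L^p(\mu)\to L^p(\nu)$ restrictedly bounded if there is $C$ such that for all $f\in L^\infty(\mu)$, $g\in L^\infty(\nu)$ with separated (disjoint) compact supports, $\left|\iint K(x,y)f(y)g(x)\,d\mu(y)\,d\nu(x)\right|\le C\|f\|_{L^p(\mu)}\|g\|_{L^{p'}(\nu)}$, $1/p+1/p'=1$; the best such $C$ is the restricted norm. *)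

theory Defs
  imports "HOL-Analysis.Analysis"
begin

definition radon_measure :: "'a::euclidean_space measure \<Rightarrow> bool" where
  "radon_measure M \<longleftrightarrow> sets M = sets borel \<and> (\<forall>S. compact S \<longrightarrow> emeasure M S < \<infinity>)"

definition no_common_atoms :: "'a measure \<Rightarrow> 'a measure \<Rightarrow> bool" where
  "no_common_atoms M N \<longleftrightarrow> (\<forall>x. emeasure M {x} = 0 \<or> emeasure N {x} = 0)"

text \<open>L^p norm (used for p > 0 on functions for which the integral is finite).\<close>
definition Lp_norm :: "'a measure \<Rightarrow> real \<Rightarrow> ('a \<Rightarrow> real) \<Rightarrow> real" where
  "Lp_norm M p f = (\<integral>x. \<bar>f x\<bar> powr p \<partial>M) powr (1 / p)"

definition memLp :: "'a measure \<Rightarrow> real \<Rightarrow> ('a \<Rightarrow> real) \<Rightarrow> bool" where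
  "memLp M p f \<longleftrightarrow> f \<in> borel_measurable M \<and> integrable M (\<lambda>x. \<bar>f x\<bar> powr p)"

definition bdd_compact_supp :: "'a::euclidean_space measure \<Rightarrow> ('a \<Rightarrow> real) \<Rightarrow> bool" where
  "bdd_compact_supp M f \<longleftrightarrow> f \<in> borel_measurable M \<and> bounded (range f) \<and>
     (\<exists>S. compact S \<and> (\<forall>y. y \<notin> S \<longrightarrow> f y = 0))"

text \<open>Kernel K(x,y) (x in the target space of N, y in the source space of M) locally square
  integrable w.r.t. the product measure nu x mu on all of R^d x R^d.\<close>
definition loc_square_integrable ::
  "'a::euclidean_space measure \<Rightarrow> 'a measure \<Rightarrow> ('a \<Rightarrow> 'a \<Rightarrow> real) \<Rightarrow> bool" where
  "loc_square_integrable N M K \<longleftrightarrow>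
     (\<lambda>z. K (fst z) (snd z)) \<in> borel_measurable (N \<Otimes>\<^sub>M M) \<and>
     (\<forall>S. compact S \<longrightarrow> set_integrable (N \<Otimes>\<^sub>M M) S (\<lambda>z. (K (fst z) (snd z))\<^sup>2))"

definition restrictedly_bounded ::
  "'a::euclidean_space measure \<Rightarrow> 'a measure \<Rightarrow> real \<Rightarrow> ('a \<Rightarrow> 'a \<Rightarrow> real) \<Rightarrow> real \<Rightarrow> bool" where
  "restrictedly_bounded M N p K C \<longleftrightarrow>
     (\<forall>f g A B. f \<in> borel_measurable M \<and> g \<in> borel_measurable N \<and>
        bounded (range f) \<and> bounded (range g) \<and> compact A \<and> compact B \<and> A \<inter> B = {} \<and>
        (\<forall>y. y \<notin> A \<longrightarrow> f y = 0) \<and> (\<forall>x. x \<notin> B \<longrightarrow> g x = 0) \<longrightarrow>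
        \<bar>\<integral>x. (\<integral>y. K x y * f y \<partial>M) * g x \<partial>N\<bar>
          \<le> C * Lp_norm M p f * Lp_norm N (p / (p - 1)) g)"

end

theory Submission
  imports Defs
begin


lemma inner_approx_step:
  fixes L :: "'a::euclidean_space measure"
  assumes rad: "radon_measure L" and D: "D \<in> sets borel" and DA: "D \<subseteq> A0" and cA: "compact A0"
    and e: "0 < e"
  shows "\<exists>K. compact K \<and> K \<subseteq> D \<and> measure L (D - K) < e"
proof -
  have sL: "sets L = sets borel" using rad by (simp add: radon_measure_def)
  have DL: "D \<in> sets L" using D sL by simp
  have finA: "emeasure L A0 < \<infinity>" using rad cA by (simp add: radon_measure_def)
  have finD: "emeasure L D < \<infinity>"
    using emeasure_mono[OF DA, of L] cA sL finA by (simp add: compact_imp_closed borel_closed)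
  define L' where "L' = density L (indicator D)"
  have sL': "sets L' = sets borel" unfolding L'_def using sL by simp
  have eL': "emeasure L' X = emeasure L (D \<inter> X)" if "X \<in> sets borel" for X
    unfolding L'_def using emeasure_restricted[OF DL, of X] that sL by simp
  have spL': "space L' = UNIV" using sets_eq_imp_space_eq[OF sL'] by simp
  have "emeasure L' (space L') = emeasure L D" using eL'[of UNIV] spL' by simp
  then have fin': "emeasure L' (space L') \<noteq> \<infinity>" using finD by simp
  have sup: "emeasure L' D = (SUP K \<in> {K. K \<subseteq> D \<and> compact K}. emeasure L' K)"
    by (rule inner_regular[OF sL' fin' D])
  define d where "d = measure L D"
  have ed: "emeasure L D = ennreal d" unfolding d_def using finD by (simp add: emeasure_eq_ennreal_measure)
  show ?thesis
  proof (cases "d < e")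
    case True
    then show ?thesis by (intro exI[of _ "{}"]) (simp add: d_def)
  next
    case False
    have "ennreal (d - e) < ennreal d" using False e by (simp add: ennreal_lessI)
    also have "ennreal d = emeasure L' D" using eL'[OF D] ed by (simp add: Int_absorb)
    finally have "ennreal (d - e) < (SUP K \<in> {K. K \<subseteq> D \<and> compact K}. emeasure L' K)" using sup by simp
    then obtain K where K: "K \<subseteq> D" "compact K" and lt: "ennreal (d - e) < emeasure L' K"
      unfolding less_SUP_iff by blast
    have KB: "K \<in> sets borel" using K(2) by (simp add: compact_imp_closed borel_closed)
    have "emeasure L' K = emeasure L K" using eL'[OF KB] K(1) by (simp add: Int_absorb1)
    also have "\<dots> = ennreal (measure L K)"
      using emeasure_mono[OF K(1), of L] DL finD by (intro emeasure_eq_ennreal_measure) (simp add: top.not_eq_extremum)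
    finally have "ennreal (d - e) < ennreal (measure L K)" using lt by simp
    then have "d - e < measure L K" using False by (subst (asm) ennreal_less_iff) auto
    moreover have "measure L (D - K) = d - measure L K"
      unfolding d_def using finD DL KB sL K(1) by (intro measure_Diff) auto
    ultimately show ?thesis using K by (intro exI[of _ K]) simp
  qed
qed

lemma inner_approx:
  fixes L :: "'a::euclidean_space measure"
  assumes rad: "radon_measure L" and D: "D \<in> sets borel" and DA: "D \<subseteq> A0" and cA: "compact A0"
  obtains Kn where "\<And>n. compact (Kn n)" "\<And>n. Kn n \<subseteq> D" "incseq Kn"
    "emeasure L (D - (\<Union>n. Kn n)) = 0"
proof -
  have "\<forall>n::nat. \<exists>K. compact K \<and> K \<subseteq> D \<and> measure L (D - K) < 1 / (real n + 1)"
    using inner_approx_step[OF rad D DA cA] by simp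
  then obtain G where G: "\<And>n. compact (G n)" "\<And>n. G n \<subseteq> D" "\<And>n. measure L (D - G n) < 1 / (real n + 1)"
    by metis
  define Kn where "Kn n = (\<Union>m\<in>{..n}. G m)" for n
  have c: "compact (Kn n)" for n unfolding Kn_def by (rule compact_UN) (auto intro: G(1))
  have s: "Kn n \<subseteq> D" for n unfolding Kn_def using G(2) by blast
  have i: "incseq Kn" unfolding Kn_def incseq_def by (auto intro: le_trans)
  have sL: "sets L = sets borel" using rad by (simp add: radon_measure_def)
  have finA: "emeasure L A0 < \<infinity>" using rad cA by (simp add: radon_measure_def)
  have finD: "emeasure L D < \<infinity>"
    using emeasure_mono[OF DA, of L] cA sL finA by (simp add: compact_imp_closed borel_closed)
  define R where "R = D - (\<Union>n. Kn n)"
  have RB: "R \<in> sets L" unfolding R_def using D sL c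
    by (simp add: compact_imp_closed borel_closed sets.Diff sets.countable_UN)
  have GB: "D - G n \<in> sets L" for n using D sL G(1) by (simp add: compact_imp_closed borel_closed sets.Diff)
  have finR: "emeasure L R < \<infinity>"
    using emeasure_mono[of R D L] D sL finD unfolding R_def by (simp add: Diff_subset)
  have mR: "measure L R \<le> 1 / (real n + 1)" for n
  proof -
    have "R \<subseteq> D - G n" unfolding R_def Kn_def by auto
    then have "measure L R \<le> measure L (D - G n)"
      using GB RB finD emeasure_mono[of "D - G n" D L] D sL
      by (intro measure_mono_fmeasurable) (auto simp: fmeasurable_def)
    then show ?thesis using G(3)[of n] by simp
  qed
  have "measure L R \<le> 0"
  proof (rule field_le_epsilon)
    fix e :: real assume "0 < e"
    then obtain n :: nat where "1 / (real n + 1) < e"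
      by (metis nat_approx_posE of_nat_Suc add.commute)
    then show "measure L R \<le> 0 + e" using mR[of n] by simp
  qed
  then have "measure L R = 0" using measure_nonneg[of L R] by linarith
  then have "emeasure L R = 0" using finR by (simp add: emeasure_eq_ennreal_measure)
  then show ?thesis using that[OF c s i] unfolding R_def by blast
qed

lemma int_powr:
  fixes L :: "'a::euclidean_space measure" and u :: "'a \<Rightarrow> real"
  assumes rad: "radon_measure L" and u: "u \<in> borel_measurable borel" and A: "compact A"
    and c: "\<And>y. \<bar>u y\<bar> \<le> c" and z: "\<And>y. y \<notin> A \<Longrightarrow> u y = 0" and r: "0 \<le> r"
  shows "integrable L (\<lambda>y. \<bar>u y\<bar> powr r)"
proof -
  have sL: "sets L = sets borel" using rad by (simp add: radon_measure_def)
  have AL: "A \<in> sets L" using A sL by (simp add: compact_imp_closed borel_closed)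
  have fin: "emeasure L A < \<infinity>" using rad A by (simp add: radon_measure_def)
  have uL: "u \<in> borel_measurable L" unfolding measurable_cong_sets[OF sL refl] by (rule u)
  have m: "(\<lambda>y. \<bar>u y\<bar> powr r) \<in> borel_measurable L" by (rule measurable_abs_powr[OF uL])
  show ?thesis
  proof (rule Bochner_Integration.integrable_bound[OF integrable_mult_right[OF integrable_real_indicator[OF AL fin], of "c powr r"] m])
    show "AE x in L. norm (\<bar>u x\<bar> powr r) \<le> norm (c powr r * indicator A x)"
    proof (rule AE_I2)
      fix x
      show "norm (\<bar>u x\<bar> powr r) \<le> norm (c powr r * indicator A x)"
      proof (cases "x \<in> A")
        case True
        then show ?thesis using powr_mono2[OF r abs_ge_zero c[of x]] by simp
      next
        case False
        then show ?thesis using z[OF False] by simp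
      qed
    qed
  qed
qed

lemma Lp_mono:
  fixes L :: "'a::euclidean_space measure" and u w :: "'a \<Rightarrow> real"
  assumes rad: "radon_measure L" and u: "u \<in> borel_measurable borel"
    and le: "\<And>y. \<bar>u y\<bar> \<le> \<bar>w y\<bar>" and iw: "integrable L (\<lambda>y. \<bar>w y\<bar> powr r)" and r: "0 < r"
  shows "Lp_norm L r u \<le> Lp_norm L r w"
proof -
  have sL: "sets L = sets borel" using rad by (simp add: radon_measure_def)
  have uL: "u \<in> borel_measurable L" unfolding measurable_cong_sets[OF sL refl] by (rule u)
  have m: "(\<lambda>y. \<bar>u y\<bar> powr r) \<in> borel_measurable L" by (rule measurable_abs_powr[OF uL])
  have bd: "norm (\<bar>u y\<bar> powr r) \<le> norm (\<bar>w y\<bar> powr r)" for y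
    using powr_mono2[of r "\<bar>u y\<bar>" "\<bar>w y\<bar>"] r le[of y] by simp
  have iu: "integrable L (\<lambda>y. \<bar>u y\<bar> powr r)"
    by (rule Bochner_Integration.integrable_bound[OF iw m]) (rule AE_I2, rule bd)
  have "(\<integral>y. \<bar>u y\<bar> powr r \<partial>L) \<le> (\<integral>y. \<bar>w y\<bar> powr r \<partial>L)"
    by (rule integral_mono[OF iu iw]) (use bd in simp)
  moreover have "0 \<le> (\<integral>y. \<bar>u y\<bar> powr r \<partial>L)" by simp
  ultimately show ?thesis unfolding Lp_norm_def
    using powr_mono2[of "1/r"] r by simp
qed



lemma abs_le_1_sq: "\<bar>k::real\<bar> \<le> 1 + k\<^sup>2"
proof -
  have "0 \<le> (\<bar>k\<bar> - 1/2)\<^sup>2" by simp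
  also have "\<dots> = k\<^sup>2 - \<bar>k\<bar> + 1/4" by (simp add: power2_eq_square algebra_simps)
  finally show ?thesis by linarith
qed


lemma countable_atoms:
  fixes L :: "'a::euclidean_space measure"
  assumes rad: "radon_measure L"
  shows "countable {x. emeasure L {x} \<noteq> 0}"
proof -
  have sL: "sets L = sets borel" using rad by (simp add: radon_measure_def)
  define L' where "L' n = density L (indicator (cball (0::'a) (real n)))" for n :: nat
  have cb: "cball (0::'a) r \<in> sets L" for r using sL by (simp add: borel_closed)
  have fm: "finite_measure (L' n)" for n
  proof (rule finite_measureI)
    have sp: "space (L' n) = UNIV" unfolding L'_def using sets_eq_imp_space_eq[OF sL] by simp
    have U: "UNIV \<in> sets L" using sL by simp
    have "emeasure (L' n) UNIV = emeasure L (cball 0 (real n) \<inter> UNIV)"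
      unfolding L'_def by (rule emeasure_restricted[OF cb U])
    then have "emeasure (L' n) (space (L' n)) = emeasure L (cball 0 (real n) \<inter> UNIV)" using sp by simp
    also have "\<dots> < \<infinity>" using rad by (simp add: radon_measure_def)
    finally show "emeasure (L' n) (space (L' n)) \<noteq> \<infinity>" by simp
  qed
  have sub: "{x. emeasure L {x} \<noteq> 0} \<subseteq> (\<Union>n. {x. measure (L' n) {x} \<noteq> 0})"
  proof
    fix x :: 'a assume x: "x \<in> {x. emeasure L {x} \<noteq> 0}"
    obtain n :: nat where n: "norm x \<le> real n" using real_arch_simple by blast
    have xs: "{x} \<in> sets L" using sL by simp
    have fin: "emeasure L {x} < \<infinity>" using rad by (simp add: radon_measure_def)
    have "measure (L' n) {x} = measure L (cball 0 (real n) \<inter> {x})"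
      unfolding L'_def by (rule measure_restricted[OF cb xs])
    also have "cball 0 (real n) \<inter> {x} = {x}" using n by (auto simp: dist_norm)
    finally have "measure (L' n) {x} = measure L {x}" .
    moreover have "measure L {x} \<noteq> 0"
      using x fin by (simp add: measure_def enn2real_eq_0_iff)
    ultimately have "measure (L' n) {x} \<noteq> 0" by simp
    then show "x \<in> (\<Union>n. {x. measure (L' n) {x} \<noteq> 0})" by blast
  qed
  have "countable (\<Union>n. {x. measure (L' n) {x} \<noteq> 0})"
    by (intro countable_UN[OF countableI_type] finite_measure.countable_support[OF fm])
  then show ?thesis using sub by (rule countable_subset[rotated])
qed



lemma partition_small:
  fixes U :: "'a::euclidean_space set"
  assumes U: "compact U" and d: "0 < \<delta>"
  obtains n :: nat and Q :: "nat \<Rightarrow> 'a set" where "\<And>i. i < n \<Longrightarrow> Q i \<in> sets borel"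
    "\<And>i j. i < n \<Longrightarrow> j < n \<Longrightarrow> i \<noteq> j \<Longrightarrow> Q i \<inter> Q j = {}"
    "U \<subseteq> (\<Union>i<n. Q i)"
    "\<And>i x y. i < n \<Longrightarrow> x \<in> Q i \<Longrightarrow> y \<in> Q i \<Longrightarrow> dist x y < \<delta>"
proof -
  have cov0: "U \<subseteq> (\<Union>c\<in>U. ball c (\<delta>/2))" using d by auto
  obtain F where F: "F \<subseteq> U" "finite F" "U \<subseteq> (\<Union>c\<in>F. ball c (\<delta>/2))"
    by (rule compactE_image[OF U _ cov0]) auto
  obtain xs where xs: "set xs = F" using finite_list[OF F(2)] by blast
  define n where "n = length xs"
  define B where "B i = ball (xs ! i) (\<delta>/2)" for i
  define Q where "Q i = B i - (\<Union>j<i. B j)" for i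
  have Qb: "Q i \<in> sets borel" for i unfolding Q_def B_def
    by (intro sets.Diff borel_open open_ball sets.finite_UN) auto
  have dis: "Q i \<inter> Q j = {}" if "i \<noteq> j" for i j
  proof (cases "i < j")
    case True
    then show ?thesis unfolding Q_def by blast
  next
    case False
    then have "j < i" using that by simp
    then show ?thesis unfolding Q_def by blast
  qed
  have cov: "U \<subseteq> (\<Union>i<n. Q i)"
  proof
    fix x assume "x \<in> U"
    then obtain c where c: "c \<in> F" "x \<in> ball c (\<delta>/2)" using F(3) by blast
    then obtain k where k: "k < n" "xs ! k = c" using xs unfolding n_def by (metis in_set_conv_nth)
    have ex: "\<exists>k. k < n \<and> x \<in> B k" using k c unfolding B_def by blast
    define m where "m = (LEAST k. k < n \<and> x \<in> B k)"
    have m: "m < n \<and> x \<in> B m" unfolding m_def by (rule LeastI_ex[OF ex])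
    have "\<not> (j < n \<and> x \<in> B j)" if "j < m" for j using not_less_Least[OF that[unfolded m_def]] .
    then have "x \<notin> B j" if "j < m" for j using that m by auto
    then have "x \<in> Q m" unfolding Q_def using m by blast
    then show "x \<in> (\<Union>i<n. Q i)" using m by blast
  qed
  have diam: "dist x y < \<delta>" if "x \<in> Q i" "y \<in> Q i" for i x y
  proof -
    have "x \<in> B i" "y \<in> B i" using that unfolding Q_def by auto
    then have "dist (xs ! i) x < \<delta>/2" "dist (xs ! i) y < \<delta>/2" unfolding B_def by auto
    then show ?thesis using dist_triangle[of x y "xs ! i"] by (simp add: dist_commute)
  qed
  show ?thesis by (rule that[of n Q]) (use Qb dis cov diam in auto)
qed



lemma young0':
  fixes x y s t :: real
  assumes "0 < s" "0 < t" "s + t = 1" "0 \<le> x" "0 \<le> y"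
  shows "x powr s * y powr t \<le> s * x + t * y"
proof (cases "x = 0 \<or> y = 0")
  case True
  then show ?thesis using assms by auto
next
  case False
  then show ?thesis using Youngs_inequality_0[of s t x y] assms by simp
qed

lemma holder2:
  fixes a1 a2 b1 b2 s t :: real
  assumes st: "0 < s" "0 < t" "s + t = 1" and nn: "0 \<le> a1" "0 \<le> a2" "0 \<le> b1" "0 \<le> b2"
  shows "a1 powr s * b2 powr t + a2 powr s * b1 powr t \<le> (a1 + a2) powr s * (b1 + b2) powr t"
proof (cases "a1 + a2 = 0 \<or> b1 + b2 = 0")
  case True
  then have "(a1 = 0 \<and> a2 = 0) \<or> (b1 = 0 \<and> b2 = 0)" using nn by linarith
  then show ?thesis using st by auto
next
  case False
  define A where "A = a1 + a2"
  define B where "B = b1 + b2"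
  have A: "0 < A" and B: "0 < B" using False nn unfolding A_def B_def by linarith+
  have y1: "(a1/A) powr s * (b2/B) powr t \<le> s * (a1/A) + t * (b2/B)"
    by (rule young0'[OF st]) (use A B nn in simp_all)
  have y2: "(a2/A) powr s * (b1/B) powr t \<le> s * (a2/A) + t * (b1/B)"
    by (rule young0'[OF st]) (use A B nn in simp_all)
  have "s * (a1/A) + t * (b2/B) + (s * (a2/A) + t * (b1/B)) = s * ((a1 + a2)/A) + t * ((b1+b2)/B)"
    using A B by (simp add: field_simps)
  also have "\<dots> = 1" using A B st unfolding A_def B_def by simp
  finally have "(a1/A) powr s * (b2/B) powr t + (a2/A) powr s * (b1/B) powr t \<le> 1" using y1 y2 by linarith
  then have "(a1 powr s * b2 powr t + a2 powr s * b1 powr t) / (A powr s * B powr t) \<le> 1"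
    using A B nn by (simp add: powr_divide add_divide_distrib)
  moreover have "0 < A powr s * B powr t" using A B by simp
  ultimately show ?thesis unfolding A_def B_def by (simp add: divide_le_eq)
qed

lemma card_split:
  assumes I: "finite I" and ij: "i \<in> I" "j \<in> I" "i \<noteq> j"
  shows "card {S \<in> Pow I. i \<in> S \<and> j \<notin> S} = 2 ^ (card I - 2)"
proof -
  have "bij_betw (\<lambda>S. S - {i}) {S \<in> Pow I. i \<in> S \<and> j \<notin> S} (Pow (I - {i, j}))"
  proof (rule bij_betw_byWitness[where f'="insert i"])
    show "\<forall>S\<in>{S \<in> Pow I. i \<in> S \<and> j \<notin> S}. insert i (S - {i}) = S" by auto
    show "\<forall>T\<in>Pow (I - {i, j}). insert i T - {i} = T" by auto
    show "(\<lambda>S. S - {i}) ` {S \<in> Pow I. i \<in> S \<and> j \<notin> S} \<subseteq> Pow (I - {i, j})" by auto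
    show "insert i ` Pow (I - {i, j}) \<subseteq> {S \<in> Pow I. i \<in> S \<and> j \<notin> S}" using ij by auto
  qed
  then have "card {S \<in> Pow I. i \<in> S \<and> j \<notin> S} = card (Pow (I - {i, j}))" by (rule bij_betw_same_card)
  also have "\<dots> = 2 ^ card (I - {i, j})" using I by (simp add: card_Pow)
  also have "card (I - {i, j}) = card I - 2" using I ij by (subst card_Diff_subset) auto
  finally show ?thesis .
qed

lemma comb_sum:
  fixes a :: "nat \<Rightarrow> nat \<Rightarrow> real"
  assumes I: "finite I"
  shows "(\<Sum>S\<in>Pow I. \<Sum>i\<in>I. \<Sum>j\<in>I. if i \<in> S \<and> j \<notin> S then a i j + a j i else 0)
    = 2 * 2 ^ (card I - 2) * (\<Sum>i\<in>I. \<Sum>j\<in>I - {i}. a i j)"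
proof -
  have fP: "finite (Pow I)" using I by simp
  have "(\<Sum>S\<in>Pow I. \<Sum>i\<in>I. \<Sum>j\<in>I. if i \<in> S \<and> j \<notin> S then a i j + a j i else 0)
     = (\<Sum>i\<in>I. \<Sum>j\<in>I. \<Sum>S\<in>Pow I. if i \<in> S \<and> j \<notin> S then a i j + a j i else 0)"
    by (subst sum.swap) (simp add: sum.swap[of _ "Pow I"])
  also have "\<dots> = (\<Sum>i\<in>I. \<Sum>j\<in>I. (a i j + a j i) * card {S \<in> Pow I. i \<in> S \<and> j \<notin> S})"
  proof (intro sum.cong refl)
    fix i j
    have "(\<Sum>S\<in>Pow I. if i \<in> S \<and> j \<notin> S then a i j + a j i else 0)
      = (\<Sum>S\<in>{S \<in> Pow I. i \<in> S \<and> j \<notin> S}. a i j + a j i)"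
      by (rule sum.inter_filter[OF fP, symmetric])
    then show "(\<Sum>S\<in>Pow I. if i \<in> S \<and> j \<notin> S then a i j + a j i else 0)
      = (a i j + a j i) * card {S \<in> Pow I. i \<in> S \<and> j \<notin> S}" by simp
  qed
  also have "\<dots> = (\<Sum>i\<in>I. \<Sum>j\<in>I. if j = i then 0 else (a i j + a j i) * 2 ^ (card I - 2))"
  proof (rule sum.cong[OF refl], rule sum.cong[OF refl])
    fix i j assume "i \<in> I" "j \<in> I"
    then show "(a i j + a j i) * card {S \<in> Pow I. i \<in> S \<and> j \<notin> S} = (if j = i then 0 else (a i j + a j i) * 2 ^ (card I - 2))"
      using card_split[OF I, of i j] by auto
  qed
  also have "\<dots> = (\<Sum>i\<in>I. \<Sum>j\<in>I - {i}. (a i j + a j i) * 2 ^ (card I - 2))"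
  proof (rule sum.cong[OF refl])
    fix i assume "i \<in> I"
    show "(\<Sum>j\<in>I. if j = i then 0 else (a i j + a j i) * 2 ^ (card I - 2)) = (\<Sum>j\<in>I - {i}. (a i j + a j i) * 2 ^ (card I - 2))"
      using I by (simp add: sum.If_cases Diff_eq Int_def)
  qed
  also have "\<dots> = 2 ^ (card I - 2) * ((\<Sum>i\<in>I. \<Sum>j\<in>I - {i}. a i j) + (\<Sum>i\<in>I. \<Sum>j\<in>I - {i}. a j i))"
    by (simp add: sum.distrib sum_distrib_left sum_distrib_right algebra_simps)
  also have "(\<Sum>i\<in>I. \<Sum>j\<in>I - {i}. a j i) = (\<Sum>i\<in>I. \<Sum>j\<in>I - {i}. a i j)"
  proof -
    have e: "(\<Sum>j\<in>I - {i}. b j) = (\<Sum>j\<in>I. if j = i then 0 else b j)" if "i \<in> I" for b :: "nat \<Rightarrow> real" and i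
      using I by (simp add: sum.If_cases Diff_eq Int_def)
    have "(\<Sum>i\<in>I. \<Sum>j\<in>I - {i}. a j i) = (\<Sum>i\<in>I. \<Sum>j\<in>I. if j = i then 0 else a j i)"
      by (rule sum.cong[OF refl], rule e)
    also have "\<dots> = (\<Sum>j\<in>I. \<Sum>i\<in>I. if j = i then 0 else a j i)" by (rule sum.swap)
    also have "\<dots> = (\<Sum>j\<in>I. \<Sum>i\<in>I. if i = j then 0 else a j i)" by (intro sum.cong refl) auto
    also have "\<dots> = (\<Sum>j\<in>I. \<Sum>i\<in>I - {j}. a j i)" by (rule sum.cong[OF refl], rule e[symmetric])
    finally show ?thesis .
  qed
  finally show ?thesis by simp
qed


lemma sum_if2:
  fixes b :: "nat \<Rightarrow> nat \<Rightarrow> real"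
  assumes I: "finite I" and S1: "S1 \<subseteq> I" and S2: "S2 \<subseteq> I"
  shows "(\<Sum>i\<in>I. \<Sum>j\<in>I. if i \<in> S1 \<and> j \<in> S2 then b i j else 0) = (\<Sum>i\<in>S1. \<Sum>j\<in>S2. b i j)"
proof -
  have e1: "(\<Sum>j\<in>I. if j \<in> S2 then b i j else 0) = (\<Sum>j\<in>S2. b i j)" for i
  proof -
    have "(\<Sum>j\<in>I. if j \<in> S2 then b i j else 0) = (\<Sum>j\<in>{j\<in>I. j \<in> S2}. b i j)"
      by (rule sum.inter_filter[OF I, symmetric])
    also have "{j\<in>I. j \<in> S2} = S2" using S2 by blast
    finally show ?thesis .
  qed
  have "(\<Sum>i\<in>I. \<Sum>j\<in>I. if i \<in> S1 \<and> j \<in> S2 then b i j else 0)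
     = (\<Sum>i\<in>I. if i \<in> S1 then (\<Sum>j\<in>S2. b i j) else 0)"
    by (rule sum.cong[OF refl]) (simp add: e1[symmetric])
  also have "\<dots> = (\<Sum>i\<in>{i\<in>I. i \<in> S1}. \<Sum>j\<in>S2. b i j)"
    by (rule sum.inter_filter[OF I, symmetric])
  also have "{i\<in>I. i \<in> S1} = S1" using S1 by blast
  finally show ?thesis .
qed

locale setting =
  fixes M N :: "'a::euclidean_space measure" and K :: "'a \<Rightarrow> 'a \<Rightarrow> real" and p C :: real
  assumes radM: "radon_measure M" and radN: "radon_measure N"
    and nca: "no_common_atoms M N"
    and p1: "1 < p"
    and lsi: "loc_square_integrable N M K"
    and C0: "C \<ge> 0"
    and rb: "restrictedly_bounded M N p K C"
begin

lemma setsM: "sets M = sets borel" and setsN: "sets N = sets borel"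
  using radM radN by (auto simp: radon_measure_def)

lemma spaceM[simp]: "space M = UNIV" and spaceN[simp]: "space N = UNIV"
  using sets_eq_imp_space_eq[OF setsM] sets_eq_imp_space_eq[OF setsN] by auto

lemma finM: "compact S \<Longrightarrow> emeasure M S < \<infinity>" and finN: "compact S \<Longrightarrow> emeasure N S < \<infinity>"
  using radM radN by (auto simp: radon_measure_def)

lemma sigma_finite_radon:
  assumes "radon_measure (L::'a measure)" shows "sigma_finite_measure L"
proof
  have s: "sets L = sets borel" using assms by (auto simp: radon_measure_def)
  show "\<exists>A. countable A \<and> A \<subseteq> sets L \<and> \<Union> A = space L \<and> (\<forall>a\<in>A. emeasure L a \<noteq> \<infinity>)"
  proof (intro exI[of _ "range (\<lambda>n::nat. cball 0 (real n))"] conjI)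
    show "range (\<lambda>n::nat. cball 0 (real n)) \<subseteq> sets L" unfolding s by (auto intro: borel_closed)
    show "\<Union> (range (\<lambda>n::nat. cball (0::'a) (real n))) = space L"
    proof -
      have "x \<in> (\<Union>n::nat. cball 0 (real n))" for x :: 'a
      proof -
        obtain n :: nat where "norm x \<le> real n" using real_arch_simple by blast
        then show ?thesis by (auto simp: dist_norm)
      qed
      then show ?thesis using sets_eq_imp_space_eq[OF s] by auto
    qed
    show "\<forall>a\<in>range (\<lambda>n::nat. cball (0::'a) (real n)). emeasure L a \<noteq> \<infinity>"
      proof
      fix a assume "a \<in> range (\<lambda>n::nat. cball (0::'a) (real n))"
      then obtain n :: nat where "a = cball 0 (real n)" by blast
      then have "compact a" by simp
      then have "emeasure L a < \<infinity>" using assms unfolding radon_measure_def by blast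
      then show "emeasure L a \<noteq> \<infinity>" by simp
    qed
  qed (rule countable_image, simp)
qed

sublocale M: sigma_finite_measure M by (rule sigma_finite_radon[OF radM])
sublocale N: sigma_finite_measure N by (rule sigma_finite_radon[OF radN])
sublocale NM: pair_sigma_finite N M ..

lemma setsNM: "sets (N \<Otimes>\<^sub>M M) = sets (borel :: ('a \<times> 'a) measure)"
  using sets_pair_measure_cong[OF setsN setsM] borel_prod by metis

lemma spaceNM[simp]: "space (N \<Otimes>\<^sub>M M) = UNIV"
  using sets_eq_imp_space_eq[OF setsNM] by simp

lemma Kmeas[measurable]: "(\<lambda>z. K (fst z) (snd z)) \<in> borel_measurable (N \<Otimes>\<^sub>M M)"
  using lsi by (simp add: loc_square_integrable_def)

lemma finNM: assumes "compact S" shows "emeasure (N \<Otimes>\<^sub>M M) S < \<infinity>"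
proof -
  have cB: "compact (fst ` S)" and cA: "compact (snd ` S)"
    using compact_continuous_image[OF continuous_on_fst[OF continuous_on_id] assms]
      compact_continuous_image[OF continuous_on_snd[OF continuous_on_id] assms] by (simp_all add: image_def)
  have "emeasure (N \<Otimes>\<^sub>M M) S \<le> emeasure (N \<Otimes>\<^sub>M M) (fst ` S \<times> snd ` S)"
    apply (rule emeasure_mono)
    using cA cB by (auto simp: setsNM compact_imp_closed intro!: borel_closed closed_Times intro: rev_image_eqI)
  also have "\<dots> = emeasure N (fst ` S) * emeasure M (snd ` S)"
    using cA cB by (intro M.emeasure_pair_measure_Times) (auto simp: setsN setsM compact_imp_closed)
  also have "\<dots> < \<infinity>" using finM[OF cA] finN[OF cB] by (simp add: ennreal_mult_less_top)
  finally show ?thesis .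
qed

lemma intK: assumes "compact S"
  shows "integrable (N \<Otimes>\<^sub>M M) (\<lambda>z. indicator S z * K (fst z) (snd z))"
proof -
  have S[measurable]: "S \<in> sets (N \<Otimes>\<^sub>M M)" using assms by (simp add: setsNM compact_imp_closed borel_closed)
  have i2: "integrable (N \<Otimes>\<^sub>M M) (\<lambda>z. indicator S z * (K (fst z) (snd z))\<^sup>2)"
    using lsi assms by (simp add: loc_square_integrable_def set_integrable_def)
  have i1: "integrable (N \<Otimes>\<^sub>M M) (\<lambda>z. indicator S z :: real)"
    using finNM[OF assms] S by (intro integrable_real_indicator) auto
  show ?thesis
  proof (rule Bochner_Integration.integrable_bound[OF Bochner_Integration.integrable_add[OF i1 i2]])
    show "AE x in N \<Otimes>\<^sub>M M. norm (indicator S x * K (fst x) (snd x)) \<le> norm (indicator S x + indicator S x * (K (fst x) (snd x))\<^sup>2)"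
    proof (rule AE_I2)
      fix x :: "'a \<times> 'a"
      have h: "\<bar>K (fst x) (snd x)\<bar> \<le> 1 + (K (fst x) (snd x))\<^sup>2"
        by (rule abs_le_1_sq)
      show "norm (indicator S x * K (fst x) (snd x)) \<le> norm (indicator S x + indicator S x * (K (fst x) (snd x))\<^sup>2)"
        using h by (cases "x \<in> S") simp_all
    qed
    show "(\<lambda>x. indicator S x * K (fst x) (snd x)) \<in> borel_measurable (N \<Otimes>\<^sub>M M)"
      by (rule borel_measurable_times[OF borel_measurable_indicator[OF S] Kmeas])
  qed
qed


lemma measM: "borel_measurable M = borel_measurable borel"
  by (rule measurable_cong_sets[OF setsM refl])
lemma measN: "borel_measurable N = borel_measurable borel"
  by (rule measurable_cong_sets[OF setsN refl])
lemma measNM: "borel_measurable (N \<Otimes>\<^sub>M M) = borel_measurable borel"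
  by (rule measurable_cong_sets[OF setsNM refl])

lemma bcsE:
  assumes "bdd_compact_supp M u"
  obtains c A where "compact A" "\<And>y. \<bar>u y\<bar> \<le> c" "\<And>y. y \<notin> A \<Longrightarrow> u y = 0" "0 \<le> c"
    "u \<in> borel_measurable borel"
proof -
  from assms obtain A where A: "compact A" "\<And>y. y \<notin> A \<Longrightarrow> u y = 0" and b: "bounded (range u)"
    and m: "u \<in> borel_measurable M"
    unfolding bdd_compact_supp_def by blast
  from b obtain c where c: "\<And>y. \<bar>u y\<bar> \<le> c" unfolding bounded_iff by auto
  have c0: "0 \<le> c" using c[of undefined] by linarith
  have mu: "u \<in> borel_measurable borel" using m unfolding measM .
  show ?thesis by (rule that[of A c], fact A(1), fact c, fact A(2), fact c0, fact mu)
qed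

definition F :: "('a \<Rightarrow> real) \<Rightarrow> ('a \<Rightarrow> real) \<Rightarrow> 'a \<times> 'a \<Rightarrow> real" where
  "F u v z = K (fst z) (snd z) * u (snd z) * v (fst z)"

definition P :: "('a \<Rightarrow> real) \<Rightarrow> ('a \<Rightarrow> real) \<Rightarrow> real" where
  "P u v = (\<integral>x. (\<integral>y. K x y * u y \<partial>M) * v x \<partial>N)"

lemma F_meas:
  assumes "u \<in> borel_measurable borel" "v \<in> borel_measurable borel"
  shows "F u v \<in> borel_measurable (N \<Otimes>\<^sub>M M)"
proof -
  have u: "(\<lambda>z. u (snd z)) \<in> borel_measurable (N \<Otimes>\<^sub>M M)"
  proof -
    have "u \<in> borel_measurable M" unfolding measM by (rule assms(1))
    from measurable_compose[OF measurable_snd this] show ?thesis .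
  qed
  have v: "(\<lambda>z. v (fst z)) \<in> borel_measurable (N \<Otimes>\<^sub>M M)"
  proof -
    have "v \<in> borel_measurable N" unfolding measN by (rule assms(2))
    from measurable_compose[OF measurable_fst this] show ?thesis .
  qed
  show ?thesis unfolding F_def[abs_def]
    by (rule borel_measurable_times[OF borel_measurable_times[OF Kmeas u] v])
qed

lemma intF_bound:
  assumes u: "u \<in> borel_measurable borel" and v: "v \<in> borel_measurable borel"
    and S: "compact S" and c: "0 \<le> c"
    and b: "\<And>z. \<bar>u (snd z) * v (fst z)\<bar> \<le> c * indicator S z"
  shows "integrable (N \<Otimes>\<^sub>M M) (F u v)"
proof (rule Bochner_Integration.integrable_bound[OF integrable_mult_right[OF intK[OF S], of c]])
  show "F u v \<in> borel_measurable (N \<Otimes>\<^sub>M M)" by (rule F_meas[OF u v])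
  show "AE z in N \<Otimes>\<^sub>M M. norm (F u v z) \<le> norm (c * (indicator S z * K (fst z) (snd z)))"
  proof (rule AE_I2)
    fix z
    have "\<bar>F u v z\<bar> = \<bar>u (snd z) * v (fst z)\<bar> * \<bar>K (fst z) (snd z)\<bar>"
      by (simp add: F_def abs_mult)
    also have "\<dots> \<le> c * indicator S z * \<bar>K (fst z) (snd z)\<bar>"
      by (rule mult_right_mono[OF b]) simp
    also have "\<dots> = \<bar>c * (indicator S z * K (fst z) (snd z))\<bar>"
      using c by (simp add: abs_mult)
    finally show "norm (F u v z) \<le> norm (c * (indicator S z * K (fst z) (snd z)))" by simp
  qed
qed

lemma intF:
  assumes "bdd_compact_supp M u" "bdd_compact_supp M v"
  shows "integrable (N \<Otimes>\<^sub>M M) (F u v)"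
proof -
  obtain A cu where A: "compact A" "\<And>y. \<bar>u y\<bar> \<le> cu" "\<And>y. y \<notin> A \<Longrightarrow> u y = 0" "0 \<le> cu"
    "u \<in> borel_measurable borel" by (rule bcsE[OF assms(1)]) (rule that)
  obtain B cv where B: "compact B" "\<And>y. \<bar>v y\<bar> \<le> cv" "\<And>y. y \<notin> B \<Longrightarrow> v y = 0" "0 \<le> cv"
    "v \<in> borel_measurable borel" by (rule bcsE[OF assms(2)]) (rule that)
  show ?thesis
  proof (rule intF_bound[OF A(5) B(5) compact_Times[OF B(1) A(1)], of "cu * cv"])
    show "0 \<le> cu * cv" using A(4) B(4) by simp
    fix z :: "'a \<times> 'a"
    show "\<bar>u (snd z) * v (fst z)\<bar> \<le> cu * cv * indicator (B \<times> A) z"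
    proof (cases "z \<in> B \<times> A")
      case True
      then show ?thesis using mult_mono[OF A(2) B(2) A(4) abs_ge_zero, of "snd z" "fst z"]
        by (simp add: abs_mult)
    next
      case False
      then have "u (snd z) = 0 \<or> v (fst z) = 0" using A(3) B(3) by (cases z) (simp, metis)
      then show ?thesis using False by (metis abs_0 indicator_simps(2) mult_zero_left mult_zero_right order_refl)
    qed
  qed
qed

lemma P_eq:
  assumes "bdd_compact_supp M u" "bdd_compact_supp M v"
  shows "P u v = integral\<^sup>L (N \<Otimes>\<^sub>M M) (F u v)"
proof -
  have "P u v = (\<integral>x. (\<integral>y. F u v (x, y) \<partial>M) \<partial>N)"
    unfolding P_def F_def by simp
  also have "\<dots> = integral\<^sup>L (N \<Otimes>\<^sub>M M) (F u v)"
    by (rule NM.integral_fst'[OF intF[OF assms]])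
  finally show ?thesis .
qed

lemma int_Tv:
  assumes "bdd_compact_supp M u" "bdd_compact_supp M v"
  shows "integrable N (\<lambda>x. (\<integral>y. K x y * u y \<partial>M) * v x)"
proof -
  have "integrable N (\<lambda>x. \<integral>y. F u v (x, y) \<partial>M)"
    by (rule NM.integrable_fst'[OF intF[OF assms]])
  then show ?thesis unfolding F_def by simp
qed


lemma Lp_nonneg: "0 \<le> Lp_norm L r u" unfolding Lp_norm_def by simp

lemma rb_borel:
  assumes u: "bdd_compact_supp M u" and v: "bdd_compact_supp M v"
    and A': "A' \<in> sets borel" and B': "B' \<in> sets borel" and dis: "A' \<inter> B' = {}"
    and zu: "\<And>y. y \<notin> A' \<Longrightarrow> u y = 0" and zv: "\<And>x. x \<notin> B' \<Longrightarrow> v x = 0"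
  shows "\<bar>P u v\<bar> \<le> C * Lp_norm M p u * Lp_norm N (p / (p - 1)) v"
proof -
  obtain A0 cu where A0: "compact A0" "\<And>y. \<bar>u y\<bar> \<le> cu" "\<And>y. y \<notin> A0 \<Longrightarrow> u y = 0" "0 \<le> cu"
    "u \<in> borel_measurable borel" by (rule bcsE[OF u]) (rule that)
  obtain B0 cv where B0: "compact B0" "\<And>y. \<bar>v y\<bar> \<le> cv" "\<And>y. y \<notin> B0 \<Longrightarrow> v y = 0" "0 \<le> cv"
    "v \<in> borel_measurable borel" by (rule bcsE[OF v]) (rule that)
  have A0b: "A0 \<in> sets borel" and B0b: "B0 \<in> sets borel"
    using A0(1) B0(1) by (simp_all add: compact_imp_closed borel_closed)
  define D1 where "D1 = A' \<inter> A0"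
  define D2 where "D2 = B' \<inter> B0"
  have D1b: "D1 \<in> sets borel" unfolding D1_def using A' A0b by (rule sets.Int)
  have D2b: "D2 \<in> sets borel" unfolding D2_def using B' B0b by (rule sets.Int)
  obtain Kn where Kn: "\<And>n. compact (Kn n)" "\<And>n. Kn n \<subseteq> D1" "incseq Kn"
    "emeasure M (D1 - (\<Union>n. Kn n)) = 0"
    by (rule inner_approx[OF radM D1b _ A0(1)]) (auto simp: D1_def)
  obtain Ln where Ln: "\<And>n. compact (Ln n)" "\<And>n. Ln n \<subseteq> D2" "incseq Ln"
    "emeasure N (D2 - (\<Union>n. Ln n)) = 0"
    by (rule inner_approx[OF radN D2b _ B0(1)]) (auto simp: D2_def)
  have Knb: "Kn n \<in> sets borel" and Lnb: "Ln n \<in> sets borel" for n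
    using Kn(1) Ln(1) by (simp_all add: compact_imp_closed borel_closed)
  define un where "un n y = u y * indicator (Kn n) y" for n y
  define vn where "vn n x = v x * indicator (Ln n) x" for n x
  define ui where "ui y = u y * indicator (\<Union>n. Kn n) y" for y
  define vi where "vi x = v x * indicator (\<Union>n. Ln n) x" for x
  have unm: "un n \<in> borel_measurable borel" for n
    unfolding un_def by (rule borel_measurable_times[OF A0(5) borel_measurable_indicator[OF Knb]])
  have vnm: "vn n \<in> borel_measurable borel" for n
    unfolding vn_def by (rule borel_measurable_times[OF B0(5) borel_measurable_indicator[OF Lnb]])
  have UKb: "(\<Union>n. Kn n) \<in> sets borel" using Knb by (intro sets.countable_UN) auto
  have ULb: "(\<Union>n. Ln n) \<in> sets borel" using Lnb by (intro sets.countable_UN) auto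
  have uim: "ui \<in> borel_measurable borel"
    unfolding ui_def by (rule borel_measurable_times[OF A0(5) borel_measurable_indicator[OF UKb]])
  have vim: "vi \<in> borel_measurable borel"
    unfolding vi_def by (rule borel_measurable_times[OF B0(5) borel_measurable_indicator[OF ULb]])
  have un_le: "\<bar>un n y\<bar> \<le> \<bar>u y\<bar>" for n y unfolding un_def by (simp add: abs_mult indicator_def)
  have vn_le: "\<bar>vn n y\<bar> \<le> \<bar>v y\<bar>" for n y unfolding vn_def by (simp add: abs_mult indicator_def)
  have un_z: "un n y = 0" if "y \<notin> Kn n" for n y using that unfolding un_def by simp
  have vn_z: "vn n y = 0" if "y \<notin> Ln n" for n y using that unfolding vn_def by simp
  have bcs_un: "bdd_compact_supp M (un n)" for n
  proof -
    have "\<forall>y\<in>range (un n). norm y \<le> cu" using un_le A0(2) by (auto intro: order_trans)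
    then have "bounded (range (un n))" unfolding bounded_iff by blast
    then show ?thesis unfolding bdd_compact_supp_def measM using unm Kn(1) un_z by blast
  qed
  have bcs_vn: "bdd_compact_supp M (vn n)" for n
  proof -
    have "\<forall>y\<in>range (vn n). norm y \<le> cv" using vn_le B0(2) by (auto intro: order_trans)
    then have "bounded (range (vn n))" unfolding bounded_iff by blast
    then show ?thesis unfolding bdd_compact_supp_def measM using vnm Ln(1) vn_z by blast
  qed
  have p0: "0 < p" using p1 by linarith
  have q0: "0 < p / (p - 1)" using p1 by simp
  have iu: "integrable M (\<lambda>y. \<bar>u y\<bar> powr p)"
    by (rule int_powr[OF radM A0(5) A0(1) A0(2) A0(3) less_imp_le[OF p0]])
  have iv: "integrable N (\<lambda>y. \<bar>v y\<bar> powr (p / (p - 1)))"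
    by (rule int_powr[OF radN B0(5) B0(1) B0(2) B0(3) less_imp_le[OF q0]])
  have bnd: "\<bar>P (un n) (vn n)\<bar> \<le> C * Lp_norm M p u * Lp_norm N (p / (p - 1)) v" for n
  proof -
    have dj: "Kn n \<inter> Ln n = {}" using Kn(2)[of n] Ln(2)[of n] dis unfolding D1_def D2_def by blast
    have "\<bar>P (un n) (vn n)\<bar> \<le> C * Lp_norm M p (un n) * Lp_norm N (p / (p - 1)) (vn n)"
    proof -
      have m1: "un n \<in> borel_measurable M" unfolding measM by (rule unm)
      have m2: "vn n \<in> borel_measurable N" unfolding measN by (rule vnm)
      have b1: "bounded (range (un n))" using bcs_un[of n] unfolding bdd_compact_supp_def by (elim conjE)
      have b2: "bounded (range (vn n))" using bcs_vn[of n] unfolding bdd_compact_supp_def by (elim conjE)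
      have R: "un n \<in> borel_measurable M \<and> vn n \<in> borel_measurable N \<and>
        bounded (range (un n)) \<and> bounded (range (vn n)) \<and> compact (Kn n) \<and> compact (Ln n) \<and> Kn n \<inter> Ln n = {} \<and>
        (\<forall>y. y \<notin> Kn n \<longrightarrow> un n y = 0) \<and> (\<forall>x. x \<notin> Ln n \<longrightarrow> vn n x = 0) \<longrightarrow>
        \<bar>\<integral>x. (\<integral>y. K x y * un n y \<partial>M) * vn n x \<partial>N\<bar>
          \<le> C * Lp_norm M p (un n) * Lp_norm N (p / (p - 1)) (vn n)"
        using spec[OF spec[OF spec[OF spec[OF rb[unfolded restrictedly_bounded_def], of "un n"], of "vn n"], of "Kn n"], of "Ln n"] .
      have "un n \<in> borel_measurable M \<and> vn n \<in> borel_measurable N \<and>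
        bounded (range (un n)) \<and> bounded (range (vn n)) \<and> compact (Kn n) \<and> compact (Ln n) \<and> Kn n \<inter> Ln n = {} \<and>
        (\<forall>y. y \<notin> Kn n \<longrightarrow> un n y = 0) \<and> (\<forall>x. x \<notin> Ln n \<longrightarrow> vn n x = 0)"
        using m1 m2 b1 b2 Kn(1)[of n] Ln(1)[of n] dj un_z vn_z by simp
      from mp[OF R this] show ?thesis unfolding P_def .
    qed
    also have "\<dots> \<le> C * Lp_norm M p u * Lp_norm N (p / (p - 1)) v"
    proof -
      have h1: "Lp_norm M p (un n) \<le> Lp_norm M p u" by (rule Lp_mono[OF radM unm un_le iu p0])
      have h2: "Lp_norm N (p / (p - 1)) (vn n) \<le> Lp_norm N (p / (p - 1)) v"
        by (rule Lp_mono[OF radN vnm vn_le iv q0])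
      have "C * Lp_norm M p (un n) \<le> C * Lp_norm M p u" by (rule mult_left_mono[OF h1 C0])
      moreover have "0 \<le> C * Lp_norm M p u" by (rule mult_nonneg_nonneg[OF C0 Lp_nonneg])
      ultimately show ?thesis by (rule mult_mono[OF _ h2 _ Lp_nonneg])
    qed
    finally show ?thesis .
  qed
  have conv: "(\<lambda>n. integral\<^sup>L (N \<Otimes>\<^sub>M M) (F (un n) (vn n))) \<longlonglongrightarrow> integral\<^sup>L (N \<Otimes>\<^sub>M M) (F ui vi)"
  proof (rule integral_dominated_convergence)
    show "F ui vi \<in> borel_measurable (N \<Otimes>\<^sub>M M)" by (rule F_meas[OF uim vim])
    show "F (un n) (vn n) \<in> borel_measurable (N \<Otimes>\<^sub>M M)" for n by (rule F_meas[OF unm vnm])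
    show "integrable (N \<Otimes>\<^sub>M M) (\<lambda>z. cu * cv * \<bar>indicator (B0 \<times> A0) z * K (fst z) (snd z)\<bar>)"
      by (intro integrable_mult_right integrable_abs intK compact_Times B0(1) A0(1))
    show "AE z in N \<Otimes>\<^sub>M M. (\<lambda>n. F (un n) (vn n) z) \<longlonglongrightarrow> F ui vi z"
    proof (rule AE_I2)
      fix z :: "'a \<times> 'a"
      have "(\<lambda>n. indicator (Kn n) (snd z) :: real) \<longlonglongrightarrow> indicator (\<Union>n. Kn n) (snd z)"
        by (rule LIMSEQ_indicator_incseq[OF Kn(3)])
      moreover have "(\<lambda>n. indicator (Ln n) (fst z) :: real) \<longlonglongrightarrow> indicator (\<Union>n. Ln n) (fst z)"
        by (rule LIMSEQ_indicator_incseq[OF Ln(3)])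
      ultimately have "(\<lambda>n. K (fst z) (snd z) * (u (snd z) * indicator (Kn n) (snd z)) * (v (fst z) * indicator (Ln n) (fst z)))
         \<longlonglongrightarrow> K (fst z) (snd z) * (u (snd z) * indicator (\<Union>n. Kn n) (snd z)) * (v (fst z) * indicator (\<Union>n. Ln n) (fst z))"
        by (intro tendsto_mult tendsto_const)
      then show "(\<lambda>n. F (un n) (vn n) z) \<longlonglongrightarrow> F ui vi z"
        unfolding F_def un_def vn_def ui_def vi_def .
    qed
    show "AE z in N \<Otimes>\<^sub>M M. norm (F (un n) (vn n) z) \<le> cu * cv * \<bar>indicator (B0 \<times> A0) z * K (fst z) (snd z)\<bar>" for n
    proof (rule AE_I2)
      fix z :: "'a \<times> 'a"
      show "norm (F (un n) (vn n) z) \<le> cu * cv * \<bar>indicator (B0 \<times> A0) z * K (fst z) (snd z)\<bar>"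
      proof (cases "z \<in> B0 \<times> A0")
        case True
        have "\<bar>un n (snd z) * vn n (fst z)\<bar> \<le> cu * cv"
          using mult_mono[OF order_trans[OF un_le A0(2)] order_trans[OF vn_le B0(2)] A0(4) abs_ge_zero]
          by (simp add: abs_mult)
        then have "\<bar>un n (snd z) * vn n (fst z)\<bar> * \<bar>K (fst z) (snd z)\<bar> \<le> cu * cv * \<bar>K (fst z) (snd z)\<bar>"
          by (rule mult_right_mono) simp
        then show ?thesis using True by (simp add: F_def abs_mult mult_ac)
      next
        case False
        then have "u (snd z) = 0 \<or> v (fst z) = 0" using A0(3) B0(3) by (cases z) (simp, metis)
        then show ?thesis using False by (auto simp: F_def un_def vn_def)
      qed
    qed
  qed
  have ae: "integral\<^sup>L (N \<Otimes>\<^sub>M M) (F ui vi) = integral\<^sup>L (N \<Otimes>\<^sub>M M) (F u v)"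
  proof (rule integral_cong_AE)
    show "F ui vi \<in> borel_measurable (N \<Otimes>\<^sub>M M)" by (rule F_meas[OF uim vim])
    show "F u v \<in> borel_measurable (N \<Otimes>\<^sub>M M)" by (rule F_meas[OF A0(5) B0(5)])
    define Z where "Z = (UNIV \<times> (D1 - (\<Union>n. Kn n))) \<union> ((D2 - (\<Union>n. Ln n)) \<times> UNIV)"
    have Z1: "D1 - (\<Union>n. Kn n) \<in> null_sets M"
      using Kn(4) D1b UKb setsM by (simp add: null_sets_def sets.Diff)
    have Z2: "D2 - (\<Union>n. Ln n) \<in> null_sets N"
      using Ln(4) D2b ULb setsN by (simp add: null_sets_def sets.Diff)
    have "Z \<in> null_sets (N \<Otimes>\<^sub>M M)" unfolding Z_def
    proof (rule null_sets.Un)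
      show "UNIV \<times> (D1 - (\<Union>n. Kn n)) \<in> null_sets (N \<Otimes>\<^sub>M M)"
        by (rule M.times_in_null_sets2[of UNIV N, OF _ Z1]) (metis sets.top spaceN)
      show "(D2 - (\<Union>n. Ln n)) \<times> UNIV \<in> null_sets (N \<Otimes>\<^sub>M M)"
        by (rule M.times_in_null_sets1[OF Z2]) (metis sets.top spaceM)
    qed
    moreover have "F ui vi z = F u v z" if "z \<notin> Z" for z
    proof -
      have "ui (snd z) = u (snd z)"
      proof (cases "u (snd z) = 0")
        case False
        then have "snd z \<in> D1" using zu A0(3) unfolding D1_def by blast
        then have "snd z \<in> (\<Union>n. Kn n)" using that unfolding Z_def by (cases z) auto
        then show ?thesis unfolding ui_def by simp
      qed (simp add: ui_def)
      moreover have "vi (fst z) = v (fst z)"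
      proof (cases "v (fst z) = 0")
        case False
        then have "fst z \<in> D2" using zv B0(3) unfolding D2_def by blast
        then have "fst z \<in> (\<Union>n. Ln n)" using that unfolding Z_def by (cases z) auto
        then show ?thesis unfolding vi_def by simp
      qed (simp add: vi_def)
      ultimately show ?thesis unfolding F_def by simp
    qed
    ultimately show "AE z in N \<Otimes>\<^sub>M M. F ui vi z = F u v z"
      by (intro AE_I'[of Z]) auto
  qed
  have conv2: "(\<lambda>n. P (un n) (vn n)) \<longlonglongrightarrow> P u v"
    using conv unfolding ae P_eq[OF bcs_un bcs_vn] P_eq[OF u v] .
  show ?thesis
    using LIMSEQ_le_const2[OF tendsto_rabs[OF conv2]] bnd by blast
qed


definition Diag :: "('a \<times> 'a) set" where "Diag = {z. fst z = snd z}"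

lemma Diag_closed: "closed Diag"
  unfolding Diag_def by (intro closed_Collect_eq continuous_on_fst continuous_on_snd continuous_on_id)

lemma Diag_null: "Diag \<in> null_sets (N \<Otimes>\<^sub>M M)"
proof -
  have DS: "Diag \<in> sets (N \<Otimes>\<^sub>M M)" unfolding setsNM using Diag_closed by (rule borel_closed)
  define Z where "Z = {x. emeasure M {x} \<noteq> 0}"
  have cZ: "countable Z" unfolding Z_def by (rule countable_atoms[OF radM])
  have "AE x in N. \<forall>y\<in>Z. x \<noteq> y"
  proof (rule AE_ball_countable')
    fix y assume "y \<in> Z"
    then have "emeasure N {y} = 0" using nca unfolding Z_def no_common_atoms_def by blast
    then have "{y} \<in> null_sets N" using setsN by (simp add: null_sets_def)
    from AE_not_in[OF this] show "AE x in N. x \<noteq> y" by simp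
  qed (rule cZ)
  then have ae: "AE x in N. emeasure M (Pair x -` Diag) = 0"
  proof (rule AE_mp[OF _ AE_I2[OF impI]])
    fix x assume "x \<in> space N" "\<forall>y\<in>Z. x \<noteq> y"
    then have "x \<notin> Z" by blast
    moreover have "Pair x -` Diag = {x}" unfolding Diag_def by auto
    ultimately show "emeasure M (Pair x -` Diag) = 0" unfolding Z_def by simp
  qed
  have "emeasure (N \<Otimes>\<^sub>M M) Diag = (\<integral>\<^sup>+x. emeasure M (Pair x -` Diag) \<partial>N)"
    by (rule M.emeasure_pair_measure_alt[OF DS])
  also have "\<dots> = (\<integral>\<^sup>+x. 0 \<partial>N)" by (rule nn_integral_cong_AE[OF ae])
  finally show ?thesis using DS by (simp add: null_sets_def)
qed

definition near :: "nat \<Rightarrow> ('a \<times> 'a) set" where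
  "near n = {z. dist (fst z) (snd z) < 1 / (real n + 1)}"

lemma near_open: "open (near n)"
  unfolding near_def by (intro open_Collect_less continuous_on_dist continuous_on_fst continuous_on_snd continuous_on_id continuous_on_const)

lemma diag_lim:
  assumes S: "compact S"
  shows "(\<lambda>n. \<integral>z. indicator S z * indicator (near n) z * \<bar>K (fst z) (snd z)\<bar> \<partial>(N \<Otimes>\<^sub>M M)) \<longlonglongrightarrow> 0"
proof -
  have Sb: "S \<in> sets (N \<Otimes>\<^sub>M M)" unfolding setsNM using S by (simp add: compact_imp_closed borel_closed)
  have nb: "near n \<in> sets (N \<Otimes>\<^sub>M M)" for n unfolding setsNM using near_open by (rule borel_open)
  have Db: "Diag \<in> sets (N \<Otimes>\<^sub>M M)" unfolding setsNM using Diag_closed by (rule borel_closed)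
  have mK: "(\<lambda>z. \<bar>K (fst z) (snd z)\<bar>) \<in> borel_measurable (N \<Otimes>\<^sub>M M)"
    by (rule borel_measurable_abs[OF Kmeas])
  have "(\<lambda>n. \<integral>z. indicator S z * indicator (near n) z * \<bar>K (fst z) (snd z)\<bar> \<partial>(N \<Otimes>\<^sub>M M))
     \<longlonglongrightarrow> (\<integral>z. indicator S z * indicator Diag z * \<bar>K (fst z) (snd z)\<bar> \<partial>(N \<Otimes>\<^sub>M M))"
  proof (rule integral_dominated_convergence[where w="\<lambda>z. \<bar>indicator S z * K (fst z) (snd z)\<bar>"])
    show "(\<lambda>z. indicator S z * indicator Diag z * \<bar>K (fst z) (snd z)\<bar>) \<in> borel_measurable (N \<Otimes>\<^sub>M M)"
      by (intro borel_measurable_times borel_measurable_indicator Sb Db mK)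
    show "(\<lambda>z. indicator S z * indicator (near n) z * \<bar>K (fst z) (snd z)\<bar>) \<in> borel_measurable (N \<Otimes>\<^sub>M M)" for n
      by (intro borel_measurable_times borel_measurable_indicator Sb nb mK)
    show "integrable (N \<Otimes>\<^sub>M M) (\<lambda>z. \<bar>indicator S z * K (fst z) (snd z)\<bar>)"
      by (intro integrable_abs intK S)
    show "AE z in N \<Otimes>\<^sub>M M. norm (indicator S z * indicator (near n) z * \<bar>K (fst z) (snd z)\<bar>) \<le> \<bar>indicator S z * K (fst z) (snd z)\<bar>" for n
      by (intro AE_I2) (simp add: indicator_def abs_mult)
    show "AE z in N \<Otimes>\<^sub>M M. (\<lambda>n. indicator S z * indicator (near n) z * \<bar>K (fst z) (snd z)\<bar>) \<longlonglongrightarrow> indicator S z * indicator Diag z * \<bar>K (fst z) (snd z)\<bar>"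
    proof (rule AE_I2)
      fix z :: "'a \<times> 'a"
      have "(\<lambda>n. indicator (near n) z :: real) \<longlonglongrightarrow> indicator Diag z"
      proof (cases "fst z = snd z")
        case True
        then have "indicator (near n) z = (1::real)" for n unfolding near_def by simp
        moreover have "indicator Diag z = (1::real)" using True unfolding Diag_def by simp
        ultimately show ?thesis by simp
      next
        case False
        then have d: "0 < dist (fst z) (snd z)" by simp
        then obtain n0 :: nat where n0: "1 / (real n0 + 1) < dist (fst z) (snd z)"
          by (metis nat_approx_posE of_nat_Suc add.commute)
        have "eventually (\<lambda>n. indicator (near n) z = (0::real)) sequentially"
          unfolding eventually_sequentially
        proof (intro exI allI impI)
          fix n assume "n0 \<le> n"
          then have "1 / (real n + 1) \<le> 1 / (real n0 + 1)" by (simp add: frac_le)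
          then show "indicator (near n) z = (0::real)" using n0 unfolding near_def by simp
        qed
        moreover have "indicator Diag z = (0::real)" using False unfolding Diag_def by simp
        ultimately show ?thesis by (simp add: tendsto_eventually)
      qed
      then show "(\<lambda>n. indicator S z * indicator (near n) z * \<bar>K (fst z) (snd z)\<bar>) \<longlonglongrightarrow> indicator S z * indicator Diag z * \<bar>K (fst z) (snd z)\<bar>"
        by (intro tendsto_mult tendsto_const)
    qed
  qed
  moreover have "(\<integral>z. indicator S z * indicator Diag z * \<bar>K (fst z) (snd z)\<bar> \<partial>(N \<Otimes>\<^sub>M M)) = (\<integral>z. 0 \<partial>(N \<Otimes>\<^sub>M M))"
  proof (rule integral_cong_AE)
    show "(\<lambda>z. indicator S z * indicator Diag z * \<bar>K (fst z) (snd z)\<bar>) \<in> borel_measurable (N \<Otimes>\<^sub>M M)"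
      by (intro borel_measurable_times borel_measurable_indicator Sb Db mK)
    show "AE z in N \<Otimes>\<^sub>M M. indicator S z * indicator Diag z * \<bar>K (fst z) (snd z)\<bar> = 0"
      using AE_not_in[OF Diag_null] by (rule AE_mp) (intro AE_I2, simp)
  qed simp
  ultimately show ?thesis by simp
qed


lemma bcs_ind:
  assumes f: "bdd_compact_supp M f" and E: "E \<in> sets borel"
  shows "bdd_compact_supp M (\<lambda>y. f y * indicator E y)"
proof -
  obtain A c where A: "compact A" "\<And>y. \<bar>f y\<bar> \<le> c" "\<And>y. y \<notin> A \<Longrightarrow> f y = 0" "0 \<le> c"
    "f \<in> borel_measurable borel" by (rule bcsE[OF f]) (rule that)
  have m: "(\<lambda>y. f y * indicator E y) \<in> borel_measurable borel"
    by (rule borel_measurable_times[OF A(5) borel_measurable_indicator[OF E]])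
  have "\<forall>y\<in>range (\<lambda>y. f y * indicator E y). norm y \<le> c"
  proof
    fix w assume "w \<in> range (\<lambda>y. f y * indicator E y)"
    then obtain y where "w = f y * indicator E y" by blast
    then show "norm w \<le> c" using A(2)[of y] A(4) by (simp add: indicator_def abs_mult)
  qed
  then have b: "bounded (range (\<lambda>y. f y * indicator E y))" unfolding bounded_iff by blast
  have z: "\<forall>y. y \<notin> A \<longrightarrow> f y * indicator E y = 0" using A(3) by simp
  show ?thesis unfolding bdd_compact_supp_def measM using m b z A(1) by blast
qed

lemma F_sum:
  assumes I: "finite I" and dQ: "disjoint_family_on Q I" and S1: "S1 \<subseteq> I" and S2: "S2 \<subseteq> I"
  shows "F (\<lambda>y. f y * indicator (\<Union>(Q ` S1)) y) (\<lambda>x. g x * indicator (\<Union>(Q ` S2)) x) z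
    = (\<Sum>i\<in>S1. \<Sum>j\<in>S2. F (\<lambda>y. f y * indicator (Q i) y) (\<lambda>x. g x * indicator (Q j) x) z)"
proof -
  have f1: "finite S1" "finite S2" using I S1 S2 finite_subset by blast+
  have d1: "disjoint_family_on Q S1" "disjoint_family_on Q S2"
    using dQ S1 S2 by (auto simp: disjoint_family_on_def)
  have "F (\<lambda>y. f y * indicator (\<Union>(Q ` S1)) y) (\<lambda>x. g x * indicator (\<Union>(Q ` S2)) x) z
    = K (fst z) (snd z) * f (snd z) * g (fst z) * ((\<Sum>i\<in>S1. indicator (Q i) (snd z)) * (\<Sum>j\<in>S2. indicator (Q j) (fst z)))"
    unfolding F_def indicator_UN_disjoint[OF f1(1) d1(1)] indicator_UN_disjoint[OF f1(2) d1(2)]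
    by (simp add: mult_ac)
  also have "\<dots> = (\<Sum>i\<in>S1. \<Sum>j\<in>S2. K (fst z) (snd z) * f (snd z) * g (fst z) * (indicator (Q i) (snd z) * indicator (Q j) (fst z)))"
    unfolding sum_product by (simp only: sum_distrib_left)
  also have "\<dots> = (\<Sum>i\<in>S1. \<Sum>j\<in>S2. F (\<lambda>y. f y * indicator (Q i) y) (\<lambda>x. g x * indicator (Q j) x) z)"
    unfolding F_def by (simp add: mult_ac)
  finally show ?thesis .
qed

lemma P_sum:
  assumes f: "bdd_compact_supp M f" and g: "bdd_compact_supp M g"
    and I: "finite I" and dQ: "disjoint_family_on Q I" and S1: "S1 \<subseteq> I" and S2: "S2 \<subseteq> I"
    and Qb: "\<And>i. i \<in> I \<Longrightarrow> Q i \<in> sets borel"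
  shows "P (\<lambda>y. f y * indicator (\<Union>(Q ` S1)) y) (\<lambda>x. g x * indicator (\<Union>(Q ` S2)) x)
    = (\<Sum>i\<in>S1. \<Sum>j\<in>S2. P (\<lambda>y. f y * indicator (Q i) y) (\<lambda>x. g x * indicator (Q j) x))"
proof -
  have f1: "finite S1" "finite S2" using I S1 S2 finite_subset by blast+
  have U1: "\<Union>(Q ` S1) \<in> sets borel" using Qb S1 f1 by (intro sets.finite_UN) auto
  have U2: "\<Union>(Q ` S2) \<in> sets borel" using Qb S2 f1 by (intro sets.finite_UN) auto
  have bi: "bdd_compact_supp M (\<lambda>y. f y * indicator (Q i) y)" if "i \<in> S1" for i
    using bcs_ind[OF f Qb] that S1 by blast
  have bj: "bdd_compact_supp M (\<lambda>x. g x * indicator (Q j) x)" if "j \<in> S2" for j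
    using bcs_ind[OF g Qb] that S2 by blast
  have "P (\<lambda>y. f y * indicator (\<Union>(Q ` S1)) y) (\<lambda>x. g x * indicator (\<Union>(Q ` S2)) x)
     = integral\<^sup>L (N \<Otimes>\<^sub>M M) (F (\<lambda>y. f y * indicator (\<Union>(Q ` S1)) y) (\<lambda>x. g x * indicator (\<Union>(Q ` S2)) x))"
    by (rule P_eq[OF bcs_ind[OF f U1] bcs_ind[OF g U2]])
  also have "\<dots> = integral\<^sup>L (N \<Otimes>\<^sub>M M) (\<lambda>z. \<Sum>i\<in>S1. \<Sum>j\<in>S2. F (\<lambda>y. f y * indicator (Q i) y) (\<lambda>x. g x * indicator (Q j) x) z)"
    by (rule arg_cong[where f="integral\<^sup>L (N \<Otimes>\<^sub>M M)"], rule ext, rule F_sum[OF I dQ S1 S2])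
  also have "\<dots> = (\<Sum>i\<in>S1. integral\<^sup>L (N \<Otimes>\<^sub>M M) (\<lambda>z. \<Sum>j\<in>S2. F (\<lambda>y. f y * indicator (Q i) y) (\<lambda>x. g x * indicator (Q j) x) z))"
    by (rule Bochner_Integration.integral_sum) (intro Bochner_Integration.integrable_sum intF bi bj, assumption+)
  also have "\<dots> = (\<Sum>i\<in>S1. \<Sum>j\<in>S2. integral\<^sup>L (N \<Otimes>\<^sub>M M) (F (\<lambda>y. f y * indicator (Q i) y) (\<lambda>x. g x * indicator (Q j) x)))"
    by (intro sum.cong refl Bochner_Integration.integral_sum intF bi bj) assumption+
  also have "\<dots> = (\<Sum>i\<in>S1. \<Sum>j\<in>S2. P (\<lambda>y. f y * indicator (Q i) y) (\<lambda>x. g x * indicator (Q j) x))"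
    by (intro sum.cong refl P_eq[symmetric] bi bj) assumption+
  finally show ?thesis .
qed


lemma bcs_int:
  assumes u: "bdd_compact_supp M u" and rad: "radon_measure L" and r: "0 \<le> r"
  shows "integrable L (\<lambda>y. \<bar>u y\<bar> powr r)"
proof -
  obtain A c where A: "compact A" "\<And>y. \<bar>u y\<bar> \<le> c" "\<And>y. y \<notin> A \<Longrightarrow> u y = 0" "0 \<le> c"
    "u \<in> borel_measurable borel" by (rule bcsE[OF u]) (rule that)
  show ?thesis by (rule int_powr[OF rad A(5) A(1) A(2) A(3) r])
qed

lemma split_int:
  assumes u: "bdd_compact_supp M u" and rad: "radon_measure L" and r: "0 < r"
    and E1: "E1 \<in> sets borel" and E2: "E2 \<in> sets borel" and dis: "E1 \<inter> E2 = {}"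
    and z: "\<And>y. y \<notin> E1 \<union> E2 \<Longrightarrow> u y = 0"
  shows "(\<integral>y. \<bar>u y * indicator E1 y\<bar> powr r \<partial>L) + (\<integral>y. \<bar>u y * indicator E2 y\<bar> powr r \<partial>L)
    = (\<integral>y. \<bar>u y\<bar> powr r \<partial>L)"
proof -
  have i1: "integrable L (\<lambda>y. \<bar>u y * indicator E1 y\<bar> powr r)"
    by (rule bcs_int[OF bcs_ind[OF u E1] rad]) (use r in linarith)
  have i2: "integrable L (\<lambda>y. \<bar>u y * indicator E2 y\<bar> powr r)"
    by (rule bcs_int[OF bcs_ind[OF u E2] rad]) (use r in linarith)
  have pt: "\<bar>u y * indicator E1 y\<bar> powr r + \<bar>u y * indicator E2 y\<bar> powr r = \<bar>u y\<bar> powr r" for y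
  proof (cases "y \<in> E1")
    case True
    then have "y \<notin> E2" using dis by blast
    then show ?thesis using True by simp
  next
    case False
    show ?thesis
    proof (cases "y \<in> E2")
      case True
      then show ?thesis using False by simp
    next
      case False2: False
      then show ?thesis using False z[of y] by simp
    qed
  qed
  show ?thesis
    unfolding Bochner_Integration.integral_add[OF i1 i2, symmetric] pt ..
qed

lemma X_bound:
  assumes f: "bdd_compact_supp M f" and g: "bdd_compact_supp M g"
    and E1: "E1 \<in> sets borel" and E2: "E2 \<in> sets borel" and dis: "E1 \<inter> E2 = {}"
    and zf: "\<And>y. y \<notin> E1 \<union> E2 \<Longrightarrow> f y = 0" and zg: "\<And>y. y \<notin> E1 \<union> E2 \<Longrightarrow> g y = 0"
  shows "\<bar>P (\<lambda>y. f y * indicator E1 y) (\<lambda>x. g x * indicator E2 x)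
        + P (\<lambda>y. f y * indicator E2 y) (\<lambda>x. g x * indicator E1 x)\<bar>
     \<le> C * Lp_norm M p f * Lp_norm N (p / (p - 1)) g"
proof -
  define q where "q = p / (p - 1)"
  have q0: "0 < q" unfolding q_def using p1 by simp
  have p0: "0 < p" using p1 by linarith
  have dis': "E2 \<inter> E1 = {}" using dis by blast
  define a1 where "a1 = (\<integral>y. \<bar>f y * indicator E1 y\<bar> powr p \<partial>M)"
  define a2 where "a2 = (\<integral>y. \<bar>f y * indicator E2 y\<bar> powr p \<partial>M)"
  define b1 where "b1 = (\<integral>y. \<bar>g y * indicator E1 y\<bar> powr q \<partial>N)"
  define b2 where "b2 = (\<integral>y. \<bar>g y * indicator E2 y\<bar> powr q \<partial>N)"
  have nn: "0 \<le> a1" "0 \<le> a2" "0 \<le> b1" "0 \<le> b2" unfolding a1_def a2_def b1_def b2_def by simp_all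
  have sa: "a1 + a2 = (\<integral>y. \<bar>f y\<bar> powr p \<partial>M)"
    unfolding a1_def a2_def by (rule split_int[OF f radM p0 E1 E2 dis zf])
  have sb: "b1 + b2 = (\<integral>y. \<bar>g y\<bar> powr q \<partial>N)"
    unfolding b1_def b2_def by (rule split_int[OF g radN q0 E1 E2 dis zg])
  have P1: "\<bar>P (\<lambda>y. f y * indicator E1 y) (\<lambda>x. g x * indicator E2 x)\<bar>
      \<le> C * Lp_norm M p (\<lambda>y. f y * indicator E1 y) * Lp_norm N q (\<lambda>x. g x * indicator E2 x)"
    unfolding q_def by (rule rb_borel[OF bcs_ind[OF f E1] bcs_ind[OF g E2] E1 E2 dis]) simp_all
  have P2: "\<bar>P (\<lambda>y. f y * indicator E2 y) (\<lambda>x. g x * indicator E1 x)\<bar>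
      \<le> C * Lp_norm M p (\<lambda>y. f y * indicator E2 y) * Lp_norm N q (\<lambda>x. g x * indicator E1 x)"
    unfolding q_def by (rule rb_borel[OF bcs_ind[OF f E2] bcs_ind[OF g E1] E2 E1 dis']) simp_all
  have st: "0 < 1 / p" "0 < 1 / q" "1 / p + 1 / q = 1" using p1 unfolding q_def by (simp_all add: field_simps)
  have H: "a1 powr (1/p) * b2 powr (1/q) + a2 powr (1/p) * b1 powr (1/q)
      \<le> (a1 + a2) powr (1/p) * (b1 + b2) powr (1/q)"
    by (rule holder2[OF st nn])
  have "\<bar>P (\<lambda>y. f y * indicator E1 y) (\<lambda>x. g x * indicator E2 x)
        + P (\<lambda>y. f y * indicator E2 y) (\<lambda>x. g x * indicator E1 x)\<bar>
      \<le> C * (a1 powr (1/p) * b2 powr (1/q) + a2 powr (1/p) * b1 powr (1/q))"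
    using P1 P2 unfolding Lp_norm_def a1_def a2_def b1_def b2_def by (simp add: algebra_simps)
  also have "\<dots> \<le> C * ((a1 + a2) powr (1/p) * (b1 + b2) powr (1/q))"
    by (rule mult_left_mono[OF H C0])
  also have "\<dots> = C * Lp_norm M p f * Lp_norm N (p / (p - 1)) g"
    unfolding sa sb Lp_norm_def q_def by simp
  finally show ?thesis .
qed


lemma off_bound:
  fixes n :: nat and Q :: "nat \<Rightarrow> 'a set"
  assumes f: "bdd_compact_supp M f" and g: "bdd_compact_supp M g"
    and n: "I = {..<n}" and dQ: "disjoint_family_on Q I" and Qb: "\<And>i. i \<in> I \<Longrightarrow> Q i \<in> sets borel"
    and zf: "\<And>y. y \<notin> \<Union>(Q ` I) \<Longrightarrow> f y = 0" and zg: "\<And>y. y \<notin> \<Union>(Q ` I) \<Longrightarrow> g y = 0"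
  shows "\<bar>\<Sum>i\<in>I. \<Sum>j\<in>I - {i}. P (\<lambda>y. f y * indicator (Q i) y) (\<lambda>x. g x * indicator (Q j) x)\<bar>
    \<le> 2 * (C * Lp_norm M p f * Lp_norm N (p / (p - 1)) g)"
proof -
  define a where "a i j = P (\<lambda>y. f y * indicator (Q i) y) (\<lambda>x. g x * indicator (Q j) x)" for i j
  define Y where "Y = C * Lp_norm M p f * Lp_norm N (p / (p - 1)) g"
  have I: "finite I" using n by simp
  have Y0: "0 \<le> Y" unfolding Y_def by (intro mult_nonneg_nonneg C0 Lp_nonneg)
  define X where "X S' = (\<Sum>i\<in>I. \<Sum>j\<in>I. if i \<in> S' \<and> j \<notin> S' then a i j + a j i else 0)" for S'
  have Xb: "\<bar>X S'\<bar> \<le> Y" if S': "S' \<subseteq> I" for S'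
  proof -
    define E1 where "E1 = \<Union>(Q ` S')"
    define E2 where "E2 = \<Union>(Q ` (I - S'))"
    have fS: "finite S'" "finite (I - S')" by (rule finite_subset[OF S' I], rule finite_Diff[OF I])
    have E1b: "E1 \<in> sets borel" unfolding E1_def using fS Qb S' by (intro sets.finite_UN) auto
    have E2b: "E2 \<in> sets borel" unfolding E2_def using fS Qb by (intro sets.finite_UN) auto
    have dis: "E1 \<inter> E2 = {}"
    proof -
      have dij: "Q i \<inter> Q j = {}" if "i \<in> S'" "j \<in> I - S'" for i j
      proof (rule disjoint_family_onD[OF dQ])
        show "i \<in> I" using that S' by (simp add: subset_iff)
        show "j \<in> I" using that by simp
        show "i \<noteq> j" using that by auto
      qed
      show ?thesis
      proof (rule equals0I)
        fix x assume "x \<in> E1 \<inter> E2"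
        then obtain i j where "i \<in> S'" "x \<in> Q i" "j \<in> I - S'" "x \<in> Q j"
          unfolding E1_def E2_def by (meson IntE UN_E)
        then show False using dij by (meson disjoint_iff)
      qed
    qed
    have un: "E1 \<union> E2 = \<Union>(Q ` I)" unfolding E1_def E2_def UN_Un[symmetric] Un_Diff_cancel Un_absorb1[OF S'] ..
    have zf': "f y = 0" if "y \<notin> E1 \<union> E2" for y using zf that un by simp
    have zg': "g y = 0" if "y \<notin> E1 \<union> E2" for y using zg that un by simp
    have sub2: "I - S' \<subseteq> I" by (rule Diff_subset)
    have h1: "P (\<lambda>y. f y * indicator E1 y) (\<lambda>x. g x * indicator E2 x) = (\<Sum>i\<in>S'. \<Sum>j\<in>I - S'. a i j)"
      unfolding E1_def E2_def a_def by (rule P_sum[OF f g I dQ S' sub2 Qb])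
    have h2: "P (\<lambda>y. f y * indicator E2 y) (\<lambda>x. g x * indicator E1 x) = (\<Sum>i\<in>I - S'. \<Sum>j\<in>S'. a i j)"
      unfolding E1_def E2_def a_def by (rule P_sum[OF f g I dQ sub2 S' Qb])
    have "X S' = (\<Sum>i\<in>I. \<Sum>j\<in>I. if i \<in> S' \<and> j \<in> I - S' then a i j else 0)
        + (\<Sum>i\<in>I. \<Sum>j\<in>I. if i \<in> S' \<and> j \<in> I - S' then a j i else 0)"
      unfolding X_def sum.distrib[symmetric] by (intro sum.cong refl) auto
    also have "(\<Sum>i\<in>I. \<Sum>j\<in>I. if i \<in> S' \<and> j \<in> I - S' then a j i else 0)
       = (\<Sum>i\<in>I. \<Sum>j\<in>I. if i \<in> I - S' \<and> j \<in> S' then a i j else 0)"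
    proof -
      have "(\<Sum>i\<in>I. \<Sum>j\<in>I. if i \<in> S' \<and> j \<in> I - S' then a j i else 0)
          = (\<Sum>j\<in>I. \<Sum>i\<in>I. if i \<in> S' \<and> j \<in> I - S' then a j i else 0)" by (rule sum.swap)
      also have "\<dots> = (\<Sum>i\<in>I. \<Sum>j\<in>I. if i \<in> I - S' \<and> j \<in> S' then a i j else 0)"
        by (intro sum.cong refl) auto
      finally show ?thesis .
    qed
    finally have "X S' = P (\<lambda>y. f y * indicator E1 y) (\<lambda>x. g x * indicator E2 x)
        + P (\<lambda>y. f y * indicator E2 y) (\<lambda>x. g x * indicator E1 x)"
      unfolding h1 h2 sum_if2[OF I S' sub2] sum_if2[OF I sub2 S'] .
    then show ?thesis unfolding Y_def using X_bound[OF f g E1b E2b dis zf' zg'] by simp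
  qed
  define Off where "Off = (\<Sum>i\<in>I. \<Sum>j\<in>I - {i}. a i j)"
  have cs: "(\<Sum>S'\<in>Pow I. X S') = 2 * 2 ^ (card I - 2) * Off"
    unfolding X_def Off_def by (rule comb_sum[OF I])
  have "\<bar>\<Sum>S'\<in>Pow I. X S'\<bar> \<le> (\<Sum>S'\<in>Pow I. \<bar>X S'\<bar>)" by (rule sum_abs)
  also have "\<dots> \<le> (\<Sum>S'\<in>Pow I. Y)" by (rule sum_mono) (use Xb in auto)
  also have "\<dots> = 2 ^ card I * Y" using I by (simp add: card_Pow)
  finally have sb: "2 * 2 ^ (card I - 2) * \<bar>Off\<bar> \<le> 2 ^ card I * Y" unfolding cs by (simp add: abs_mult)
  have cI: "card I = n" using n by simp
  show ?thesis
  proof (cases "2 \<le> n")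
    case True
    have "(2::real) ^ card I = 2 * 2 * 2 ^ (card I - 2)"
      using True cI by (metis (no_types) le_add_diff_inverse mult.assoc power_add power2_eq_square)
    then have "2 * 2 ^ (card I - 2) * \<bar>Off\<bar> \<le> 2 * 2 ^ (card I - 2) * (2 * Y)" using sb by simp
    then have "\<bar>Off\<bar> \<le> 2 * Y" by (rule mult_left_le_imp_le) simp
    then show ?thesis unfolding Off_def a_def Y_def .
  next
    case False
    then have e: "I - {i} = {}" if "i \<in> I" for i using that n by auto
    have "Off = 0" unfolding Off_def by (rule sum.neutral) (simp add: e)
    then show ?thesis unfolding Off_def a_def using Y0 Y_def by simp
  qed
qed


lemma diag_bound:
  fixes n n0 :: nat and Q :: "nat \<Rightarrow> 'a set"
  assumes f: "bdd_compact_supp M f" and g: "bdd_compact_supp M g"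
    and A: "compact A" "\<And>y. \<bar>f y\<bar> \<le> cf" "\<And>y. y \<notin> A \<Longrightarrow> f y = 0" "0 \<le> cf"
    and B: "compact B" "\<And>y. \<bar>g y\<bar> \<le> cg" "\<And>y. y \<notin> B \<Longrightarrow> g y = 0" "0 \<le> cg"
    and n: "I = {..<n}" and dQ: "disjoint_family_on Q I" and Qb: "\<And>i. i \<in> I \<Longrightarrow> Q i \<in> sets borel"
    and diam: "\<And>i x y. i \<in> I \<Longrightarrow> x \<in> Q i \<Longrightarrow> y \<in> Q i \<Longrightarrow> dist x y < 1 / (real n0 + 1)"
  shows "\<bar>\<Sum>i\<in>I. P (\<lambda>y. f y * indicator (Q i) y) (\<lambda>x. g x * indicator (Q i) x)\<bar>
    \<le> cf * cg * (\<integral>z. indicator (B \<times> A) z * indicator (near n0) z * \<bar>K (fst z) (snd z)\<bar> \<partial>(N \<Otimes>\<^sub>M M))"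
proof -
  have I: "finite I" using n by simp
  have S: "compact (B \<times> A)" using A(1) B(1) by (rule compact_Times[rotated])
  have Sb: "B \<times> A \<in> sets (N \<Otimes>\<^sub>M M)" unfolding setsNM using S by (simp add: compact_imp_closed borel_closed)
  have nb: "near n0 \<in> sets (N \<Otimes>\<^sub>M M)" unfolding setsNM using near_open by (rule borel_open)
  have bi: "bdd_compact_supp M (\<lambda>y. f y * indicator (Q i) y)" if "i \<in> I" for i
    using bcs_ind[OF f Qb[OF that]] .
  have bj: "bdd_compact_supp M (\<lambda>x. g x * indicator (Q i) x)" if "i \<in> I" for i
    using bcs_ind[OF g Qb[OF that]] .
  define h where "h z = (\<Sum>i\<in>I. F (\<lambda>y. f y * indicator (Q i) y) (\<lambda>x. g x * indicator (Q i) x) z)" for z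
  define w where "w z = cf * cg * (indicator (B \<times> A) z * indicator (near n0) z * \<bar>K (fst z) (snd z)\<bar>)" for z
  have ih: "integrable (N \<Otimes>\<^sub>M M) h" unfolding h_def
    by (intro Bochner_Integration.integrable_sum intF bi bj) assumption+
  have "(\<Sum>i\<in>I. P (\<lambda>y. f y * indicator (Q i) y) (\<lambda>x. g x * indicator (Q i) x))
     = (\<Sum>i\<in>I. integral\<^sup>L (N \<Otimes>\<^sub>M M) (F (\<lambda>y. f y * indicator (Q i) y) (\<lambda>x. g x * indicator (Q i) x)))"
    by (intro sum.cong refl P_eq bi bj) assumption+
  also have "\<dots> = integral\<^sup>L (N \<Otimes>\<^sub>M M) h" unfolding h_def
    by (rule Bochner_Integration.integral_sum[symmetric]) (intro intF bi bj, assumption+)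
  finally have eq: "(\<Sum>i\<in>I. P (\<lambda>y. f y * indicator (Q i) y) (\<lambda>x. g x * indicator (Q i) x)) = integral\<^sup>L (N \<Otimes>\<^sub>M M) h" .
  have mK: "(\<lambda>z. \<bar>K (fst z) (snd z)\<bar>) \<in> borel_measurable (N \<Otimes>\<^sub>M M)"
    by (rule borel_measurable_abs[OF Kmeas])
  have mw: "w \<in> borel_measurable (N \<Otimes>\<^sub>M M)" unfolding w_def
    by (intro borel_measurable_times borel_measurable_indicator Sb nb mK borel_measurable_const)
  have pt: "\<bar>h z\<bar> \<le> w z" for z
  proof -
    define \<sigma> where "\<sigma> = (\<Sum>i\<in>I. indicator (Q i) (snd z) * indicator (Q i) (fst z) :: real)"
    have hz: "h z = K (fst z) (snd z) * f (snd z) * g (fst z) * \<sigma>"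
      unfolding h_def \<sigma>_def F_def by (simp add: sum_distrib_left mult_ac)
    have s0: "0 \<le> \<sigma>" unfolding \<sigma>_def by (intro sum_nonneg) simp
    have s1: "\<sigma> \<le> indicator (near n0) z"
    proof (cases "z \<in> near n0")
      case True
      have "\<sigma> \<le> (\<Sum>i\<in>I. indicator (Q i) (snd z))"
        unfolding \<sigma>_def by (intro sum_mono) (simp add: indicator_def)
      also have "\<dots> = indicator (\<Union>(Q ` I)) (snd z)" by (rule indicator_UN_disjoint[OF I dQ, symmetric])
      also have "\<dots> \<le> 1" by (simp add: indicator_def)
      finally show ?thesis using True by simp
    next
      case False
      have "indicator (Q i) (snd z) * indicator (Q i) (fst z) = (0::real)" if "i \<in> I" for i
      proof (rule ccontr)
        assume "indicator (Q i) (snd z) * indicator (Q i) (fst z) \<noteq> (0::real)"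
        then have "snd z \<in> Q i" "fst z \<in> Q i" by (auto simp: indicator_def split: if_splits)
        then have "dist (fst z) (snd z) < 1 / (real n0 + 1)" using diam[OF that] by blast
        then show False using False unfolding near_def by simp
      qed
      then have "\<sigma> = 0" unfolding \<sigma>_def by (intro sum.neutral) simp
      then show ?thesis by simp
    qed
    have fg: "\<bar>f (snd z) * g (fst z)\<bar> \<le> cf * cg * indicator (B \<times> A) z"
    proof (cases "z \<in> B \<times> A")
      case True
      then show ?thesis using mult_mono[OF A(2) B(2) A(4) abs_ge_zero, of "snd z" "fst z"]
        by (simp add: abs_mult)
    next
      case False
      then have "f (snd z) = 0 \<or> g (fst z) = 0" using A(3) B(3) by (cases z) (simp, metis)
      then show ?thesis using False by (metis abs_0 indicator_simps(2) mult_zero_left mult_zero_right order_refl)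
    qed
    have "\<bar>h z\<bar> = \<bar>K (fst z) (snd z)\<bar> * \<bar>f (snd z) * g (fst z)\<bar> * \<sigma>"
      unfolding hz using s0 by (simp add: abs_mult mult_ac)
    also have "\<dots> \<le> \<bar>K (fst z) (snd z)\<bar> * (cf * cg * indicator (B \<times> A) z) * indicator (near n0) z"
      by (intro mult_mono mult_left_mono fg s1 s0 mult_nonneg_nonneg abs_ge_zero A(4) B(4)) simp_all
    also have "\<dots> = w z" unfolding w_def by (simp add: mult_ac)
    finally show ?thesis .
  qed
  have iw: "integrable (N \<Otimes>\<^sub>M M) w"
  proof (rule Bochner_Integration.integrable_bound[OF integrable_mult_right[OF integrable_abs[OF intK[OF S]], of "cf * cg"] mw])
    show "AE z in N \<Otimes>\<^sub>M M. norm (w z) \<le> norm (cf * cg * \<bar>indicator (B \<times> A) z * K (fst z) (snd z)\<bar>)"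
      by (intro AE_I2) (use A(4) B(4) in \<open>simp add: w_def indicator_def abs_mult\<close>)
  qed
  have "\<bar>integral\<^sup>L (N \<Otimes>\<^sub>M M) h\<bar> \<le> integral\<^sup>L (N \<Otimes>\<^sub>M M) (\<lambda>z. \<bar>h z\<bar>)"
    using integral_norm_bound[of "N \<Otimes>\<^sub>M M" h] by simp
  also have "\<dots> \<le> integral\<^sup>L (N \<Otimes>\<^sub>M M) w"
    by (rule integral_mono[OF integrable_abs[OF ih] iw]) (rule pt)
  also have "\<dots> = cf * cg * (\<integral>z. indicator (B \<times> A) z * indicator (near n0) z * \<bar>K (fst z) (snd z)\<bar> \<partial>(N \<Otimes>\<^sub>M M))"
    unfolding w_def by simp
  finally show ?thesis unfolding eq .
qed


lemma main_est:
  assumes f: "bdd_compact_supp M f" and g: "bdd_compact_supp M g"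
  shows "\<bar>P f g\<bar> \<le> 2 * C * Lp_norm M p f * Lp_norm N (p / (p - 1)) g"
proof -
  obtain A cf where A: "compact A" "\<And>y. \<bar>f y\<bar> \<le> cf" "\<And>y. y \<notin> A \<Longrightarrow> f y = 0" "0 \<le> cf"
    "f \<in> borel_measurable borel" by (rule bcsE[OF f]) (rule that)
  obtain B cg where B: "compact B" "\<And>y. \<bar>g y\<bar> \<le> cg" "\<And>y. y \<notin> B \<Longrightarrow> g y = 0" "0 \<le> cg"
    "g \<in> borel_measurable borel" by (rule bcsE[OF g]) (rule that)
  define R where "R = 2 * (C * Lp_norm M p f * Lp_norm N (p / (p - 1)) g)"
  have S: "compact (B \<times> A)" using A(1) B(1) by (rule compact_Times[rotated])
  have U: "compact (A \<union> B)" using A(1) B(1) by (rule compact_Un)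
  have key: "\<bar>P f g\<bar> \<le> R + cf * cg * \<epsilon>" if e: "0 < \<epsilon>" for \<epsilon>
  proof -
    define X where "X n = (\<integral>z. indicator (B \<times> A) z * indicator (near n) z * \<bar>K (fst z) (snd z)\<bar> \<partial>(N \<Otimes>\<^sub>M M))" for n
    have "X \<longlonglongrightarrow> 0" unfolding X_def by (rule diag_lim[OF S])
    from LIMSEQ_D[OF this e] obtain n0 where "\<forall>n\<ge>n0. norm (X n - 0) < \<epsilon>" by blast
    then have Xn0: "X n0 \<le> \<epsilon>" by auto
    have d: "0 < 1 / (real n0 + 1)" by simp
    obtain n :: nat and Q :: "nat \<Rightarrow> 'a set" where
      Qb0: "\<And>i. i < n \<Longrightarrow> Q i \<in> sets borel" and
      Qd: "\<And>i j. i < n \<Longrightarrow> j < n \<Longrightarrow> i \<noteq> j \<Longrightarrow> Q i \<inter> Q j = {}" and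
      Qc: "A \<union> B \<subseteq> (\<Union>i<n. Q i)" and
      Qdiam: "\<And>i x y. i < n \<Longrightarrow> x \<in> Q i \<Longrightarrow> y \<in> Q i \<Longrightarrow> dist x y < 1 / (real n0 + 1)"
      by (rule partition_small[OF U d]) (rule that)
    define I where "I = {..<n}"
    have I: "finite I" unfolding I_def by simp
    have dQ: "disjoint_family_on Q I" unfolding disjoint_family_on_def I_def using Qd by simp
    have Qb: "Q i \<in> sets borel" if "i \<in> I" for i using Qb0 that unfolding I_def by simp
    have diam: "dist x y < 1 / (real n0 + 1)" if "i \<in> I" "x \<in> Q i" "y \<in> Q i" for i x y
      using Qdiam that unfolding I_def by simp
    have cov: "A \<union> B \<subseteq> \<Union>(Q ` I)" using Qc unfolding I_def by simp
    have zf: "f y = 0" if "y \<notin> \<Union>(Q ` I)" for y using that cov A(3) by blast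
    have zg: "g y = 0" if "y \<notin> \<Union>(Q ` I)" for y using that cov B(3) by blast
    have fe: "(\<lambda>y. f y * indicator (\<Union>(Q ` I)) y) = f"
    proof
      fix y show "f y * indicator (\<Union>(Q ` I)) y = f y" using zf[of y] by (cases "y \<in> \<Union>(Q ` I)") simp_all
    qed
    have ge: "(\<lambda>x. g x * indicator (\<Union>(Q ` I)) x) = g"
    proof
      fix y show "g y * indicator (\<Union>(Q ` I)) y = g y" using zg[of y] by (cases "y \<in> \<Union>(Q ` I)") simp_all
    qed
    define a where "a i j = P (\<lambda>y. f y * indicator (Q i) y) (\<lambda>x. g x * indicator (Q j) x)" for i j
    have "P f g = (\<Sum>i\<in>I. \<Sum>j\<in>I. a i j)"
      using P_sum[OF f g I dQ order_refl order_refl Qb] unfolding fe ge a_def .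
    also have "\<dots> = (\<Sum>i\<in>I. a i i + (\<Sum>j\<in>I - {i}. a i j))"
      by (rule sum.cong[OF refl], rule sum.remove[OF I])
    also have "\<dots> = (\<Sum>i\<in>I. a i i) + (\<Sum>i\<in>I. \<Sum>j\<in>I - {i}. a i j)" by (rule sum.distrib)
    finally have Pfg: "P f g = (\<Sum>i\<in>I. a i i) + (\<Sum>i\<in>I. \<Sum>j\<in>I - {i}. a i j)" .
    have D: "\<bar>\<Sum>i\<in>I. a i i\<bar> \<le> cf * cg * X n0"
      unfolding a_def X_def by (rule diag_bound[OF f g A(1-4) B(1-4) I_def dQ Qb diam])
    have O: "\<bar>\<Sum>i\<in>I. \<Sum>j\<in>I - {i}. a i j\<bar> \<le> R"
      unfolding a_def R_def by (rule off_bound[OF f g I_def dQ Qb zf zg])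
    have "cf * cg * X n0 \<le> cf * cg * \<epsilon>" by (rule mult_left_mono[OF Xn0]) (use A(4) B(4) in simp)
    then show ?thesis unfolding Pfg using D O by linarith
  qed
  have "\<bar>P f g\<bar> \<le> R"
  proof (rule field_le_epsilon)
    fix e :: real assume e: "0 < e"
    define \<epsilon> where "\<epsilon> = e / (cf * cg + 1)"
    have c1: "0 < cf * cg + 1" using A(4) B(4) by (simp add: add_nonneg_pos)
    have e1: "0 < \<epsilon>" unfolding \<epsilon>_def using e c1 by simp
    have "cf * cg * \<epsilon> \<le> e"
    proof -
      have "cf * cg * \<epsilon> = e * (cf * cg / (cf * cg + 1))" unfolding \<epsilon>_def by (simp add: field_simps)
      also have "\<dots> \<le> e * 1" using c1 e by (intro mult_left_mono) simp_all
      finally show ?thesis by simp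
    qed
    then show "\<bar>P f g\<bar> \<le> R + e" using key[OF e1] by linarith
  qed
  then show ?thesis unfolding R_def by (simp add: mult.assoc)
qed


lemma duality:
  fixes h :: "'a \<Rightarrow> real" and B :: real
  assumes hm: "h \<in> borel_measurable borel" and B0: "0 \<le> B"
    and ig: "\<And>g. bdd_compact_supp M g \<Longrightarrow> integrable N (\<lambda>x. h x * g x)"
    and bd: "\<And>g. bdd_compact_supp M g \<Longrightarrow> \<bar>\<integral>x. h x * g x \<partial>N\<bar> \<le> B * Lp_norm N (p / (p - 1)) g"
  shows "integrable N (\<lambda>x. \<bar>h x\<bar> powr p) \<and> Lp_norm N p h \<le> B"
proof -
  define q where "q = p / (p - 1)"
  have p0: "0 < p" and pm: "0 < p - 1" using p1 by linarith+
  have q0: "0 < q" unfolding q_def using p1 by simp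
  have pq: "(p - 1) * q = p" unfolding q_def using pm by simp
  have st: "1 / p + 1 / q = 1" unfolding q_def using p1 by (simp add: field_simps)
  define m where "m n x = min \<bar>h x\<bar> (real n)" for n :: nat and x
  define c where "c n = (indicator (cball (0::'a) (real n)) :: 'a \<Rightarrow> real)" for n :: nat
  define gn where "gn n x = sgn (h x) * m n x powr (p - 1) * c n x" for n x
  define \<phi> where "\<phi> n x = m n x powr p * c n x" for n x
  have m0: "0 \<le> m n x" for n x unfolding m_def by simp
  have mh: "m n x \<le> \<bar>h x\<bar>" for n x unfolding m_def by simp
  have mn: "m n x \<le> real n" for n x unfolding m_def by simp
  have cb: "cball (0::'a) r \<in> sets borel" for r by (simp add: borel_closed)
  have mm: "(\<lambda>x. m n x) \<in> borel_measurable borel" for n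
    unfolding m_def by (intro borel_measurable_min borel_measurable_abs hm borel_measurable_const)
  have gm: "gn n \<in> borel_measurable borel" for n unfolding gn_def c_def
    by (intro borel_measurable_times borel_measurable_indicator cb powr_real_measurable mm
        borel_measurable_const measurable_compose[OF hm borel_measurable_sgn])
  have bcs_g: "bdd_compact_supp M (gn n)" for n
  proof -
    have "\<bar>gn n x\<bar> \<le> real n powr (p - 1)" for x
    proof -
      have "\<bar>gn n x\<bar> \<le> m n x powr (p - 1)"
        unfolding gn_def c_def by (simp add: abs_mult abs_sgn_eq indicator_def)
      also have "\<dots> \<le> real n powr (p - 1)" by (rule powr_mono2) (use pm m0 mn in auto)
      finally show ?thesis .
    qed
    then have "\<forall>y\<in>range (gn n). norm y \<le> real n powr (p - 1)" by auto
    then have b: "bounded (range (gn n))" unfolding bounded_iff by blast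
    have z: "\<forall>y. y \<notin> cball 0 (real n) \<longrightarrow> gn n y = 0" unfolding gn_def c_def by simp
    show ?thesis unfolding bdd_compact_supp_def measM using gm b z compact_cball by blast
  qed
  have \<phi>m: "\<phi> n \<in> borel_measurable N" for n unfolding \<phi>_def c_def measN
    by (intro borel_measurable_times borel_measurable_indicator cb powr_real_measurable mm borel_measurable_const)
  have gq: "\<bar>gn n x\<bar> powr q = \<phi> n x" for n x
  proof -
    have "\<bar>gn n x\<bar> = \<bar>sgn (h x)\<bar> * m n x powr (p - 1) * c n x"
      unfolding gn_def c_def by (simp add: abs_mult indicator_def)
    show ?thesis
    proof (cases "h x = 0 \<or> c n x = 0")
      case True
      then show ?thesis unfolding gn_def \<phi>_def m_def by auto
    next
      case False
      then have "\<bar>gn n x\<bar> = m n x powr (p - 1)" unfolding gn_def c_def by (simp add: abs_mult indicator_def sgn_if)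
      then have "\<bar>gn n x\<bar> powr q = m n x powr ((p - 1) * q)" by (simp add: powr_powr)
      also have "\<dots> = \<phi> n x" unfolding pq \<phi>_def using False unfolding c_def by (simp add: indicator_def)
      finally show ?thesis .
    qed
  qed
  have \<phi>i: "integrable N (\<phi> n)" for n
  proof -
    have "integrable N (\<lambda>x. \<bar>gn n x\<bar> powr q)" by (rule bcs_int[OF bcs_g radN]) (use q0 in simp)
    then show ?thesis unfolding gq .
  qed
  have hg: "\<phi> n x \<le> h x * gn n x" for n x
  proof -
    have "h x * gn n x = \<bar>h x\<bar> * m n x powr (p - 1) * c n x"
      unfolding gn_def by (cases "h x" rule: linorder_cases) (simp_all add: sgn_if)
    moreover have "m n x powr p \<le> \<bar>h x\<bar> * m n x powr (p - 1)"
    proof (cases "m n x = 0")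
      case True then show ?thesis using p0 by simp
    next
      case False
      have "m n x powr p = m n x powr (1 + (p - 1))" by simp
      also have "\<dots> = m n x powr 1 * m n x powr (p - 1)" by (rule powr_add)
      also have "m n x powr 1 = m n x" using m0[of n x] by simp
      finally have "m n x powr p = m n x * m n x powr (p - 1)" .
      also have "\<dots> \<le> \<bar>h x\<bar> * m n x powr (p - 1)" by (rule mult_right_mono[OF mh]) simp
      finally show ?thesis .
    qed
    moreover have "0 \<le> c n x" unfolding c_def by simp
    ultimately show ?thesis unfolding \<phi>_def by (simp add: mult_right_mono)
  qed
  define In where "In n = integral\<^sup>L N (\<phi> n)" for n
  have In0: "0 \<le> In n" for n unfolding In_def \<phi>_def c_def by (intro integral_nonneg_AE AE_I2) simp
  have InB: "In n \<le> B powr p" for n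
  proof -
    have "In n \<le> (\<integral>x. h x * gn n x \<partial>N)"
      unfolding In_def by (rule integral_mono[OF \<phi>i ig[OF bcs_g]]) (rule hg)
    also have "\<dots> \<le> B * Lp_norm N q (gn n)" using bd[OF bcs_g, of n] unfolding q_def by simp
    also have "Lp_norm N q (gn n) = In n powr (1 / q)" unfolding Lp_norm_def In_def gq ..
    finally have le: "In n \<le> B * In n powr (1 / q)" .
    show ?thesis
    proof (cases "In n = 0")
      case True then show ?thesis using B0 by simp
    next
      case False
      then have pos: "0 < In n" using In0[of n] by simp
      have "In n powr (1/p) * In n powr (1/q) = In n" using pos st by (simp add: powr_add[symmetric])
      then have "In n powr (1/p) * In n powr (1/q) \<le> B * In n powr (1/q)" using le by simp
      then have r: "In n powr (1/p) \<le> B" using pos by simp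
      have "In n = (In n powr (1/p)) powr p" using pos p0 by (simp add: powr_powr)
      also have "\<dots> \<le> B powr p" by (rule powr_mono2) (use p0 r in simp_all)
      finally show ?thesis .
    qed
  qed
  have \<phi>mono: "\<phi> n x \<le> \<phi> (Suc n) x" for n x
  proof -
    have mle: "m n x \<le> m (Suc n) x" unfolding m_def by simp
    have "m n x powr p \<le> m (Suc n) x powr p" by (rule powr_mono2[OF _ m0 mle]) (use p0 in simp)
    moreover have "c n x \<le> c (Suc n) x" unfolding c_def by (simp add: indicator_def)
    moreover have "0 \<le> c n x" unfolding c_def by simp
    ultimately show ?thesis unfolding \<phi>_def by (intro mult_mono) simp_all
  qed
  have Inmono: "In n \<le> In (Suc n)" for n unfolding In_def by (rule integral_mono[OF \<phi>i \<phi>i]) (rule \<phi>mono)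
  have "convergent In"
  proof (rule Bseq_mono_convergent)
    show "Bseq In" by (rule BseqI'[of _ "B powr p"]) (use In0 InB in simp)
    have "incseq In" by (rule incseq_SucI) (rule Inmono)
    then show "\<forall>m n. m \<le> n \<longrightarrow> In m \<le> In n" unfolding incseq_def by blast
  qed
  then have Ilim: "In \<longlonglongrightarrow> lim In" by (simp add: convergent_LIMSEQ_iff)
  have conv: "(\<lambda>n. \<phi> n x) \<longlonglongrightarrow> \<bar>h x\<bar> powr p" for x
  proof (rule tendsto_eventually)
    obtain k :: nat where k: "max \<bar>h x\<bar> (norm x) \<le> real k" using real_arch_simple by blast
    show "eventually (\<lambda>n. \<phi> n x = \<bar>h x\<bar> powr p) sequentially"
      unfolding eventually_sequentially
    proof (intro exI allI impI)
      fix n assume "k \<le> n"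
      then have "real k \<le> real n" by simp
      then have "\<bar>h x\<bar> \<le> real n" "norm x \<le> real n" using k by linarith+
      then show "\<phi> n x = \<bar>h x\<bar> powr p" unfolding \<phi>_def m_def c_def by (simp add: dist_norm)
    qed
  qed
  have hpm: "(\<lambda>x. \<bar>h x\<bar> powr p) \<in> borel_measurable N" unfolding measN by (rule measurable_abs_powr[OF hm])
  have A1: "AE x in N. mono (\<lambda>n. \<phi> n x)" by (intro AE_I2) (simp add: mono_iff_le_Suc \<phi>mono)
  have A2: "AE x in N. 0 \<le> \<phi> i x" for i by (intro AE_I2) (simp add: \<phi>_def c_def)
  have A3: "AE x in N. (\<lambda>i. \<phi> i x) \<longlonglongrightarrow> \<bar>h x\<bar> powr p" by (intro AE_I2) (rule conv)
  have A4: "(\<lambda>i. integral\<^sup>L N (\<phi> i)) \<longlonglongrightarrow> lim In" using Ilim unfolding In_def .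
  have mc: "integrable N (\<lambda>x. \<bar>h x\<bar> powr p) \<and> integral\<^sup>L N (\<lambda>x. \<bar>h x\<bar> powr p) = lim In"
    using integral_monotone_convergence_nonneg[where f=\<phi>, OF \<phi>i A1 A2 A3 A4 hpm] by blast
  have "lim In \<le> B powr p" using LIMSEQ_le_const2[OF Ilim] InB by blast
  then have "integral\<^sup>L N (\<lambda>x. \<bar>h x\<bar> powr p) \<le> B powr p" using mc by simp
  then have "Lp_norm N p h \<le> (B powr p) powr (1 / p)" unfolding Lp_norm_def
    by (intro powr_mono2) (use p0 in simp_all)
  also have "\<dots> = B" using B0 p0 by (simp add: powr_powr)
  finally show ?thesis using mc by simp
qed

end

theorem theorem3p2:
  fixes M N :: "'a::euclidean_space measure"
    and K :: "'a \<Rightarrow> 'a \<Rightarrow> real" and f :: "'a \<Rightarrow> real" and p C :: real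
  assumes "radon_measure M" and "radon_measure N"
    and "no_common_atoms M N"
    and "1 < p"
    and "loc_square_integrable N M K"
    and "C \<ge> 0"
    and "restrictedly_bounded M N p K C"
    and "bdd_compact_supp M f"
  shows "memLp N p (\<lambda>x. \<integral>y. K x y * f y \<partial>M)
    \<and> Lp_norm N p (\<lambda>x. \<integral>y. K x y * f y \<partial>M) \<le> 2 * C * Lp_norm M p f"
proof -
  interpret setting M N K p C by (rule setting.intro[OF assms(1-7)])
  have f: "bdd_compact_supp M f" by (rule assms(8))
  obtain A cf where A: "compact A" "\<And>y. \<bar>f y\<bar> \<le> cf" "\<And>y. y \<notin> A \<Longrightarrow> f y = 0" "0 \<le> cf"
    "f \<in> borel_measurable borel" by (rule bcsE[OF f]) (rule that)
  define h where "h x = (\<integral>y. K x y * f y \<partial>M)" for x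
  have fs: "(\<lambda>z. f (snd z)) \<in> borel_measurable (N \<Otimes>\<^sub>M M)"
  proof -
    have "f \<in> borel_measurable M" unfolding measM by (rule A(5))
    from measurable_compose[OF measurable_snd this] show ?thesis .
  qed
  have "(\<lambda>z. K (fst z) (snd z) * f (snd z)) \<in> borel_measurable (N \<Otimes>\<^sub>M M)"
    by (rule borel_measurable_times[OF Kmeas fs])
  then have "case_prod (\<lambda>x y. K x y * f y) \<in> borel_measurable (N \<Otimes>\<^sub>M M)"
    unfolding case_prod_beta' .
  from M.borel_measurable_lebesgue_integral[OF this]
  have hN: "h \<in> borel_measurable N" unfolding h_def .
  have hm: "h \<in> borel_measurable borel" using hN unfolding measN .
  have B0: "0 \<le> 2 * C * Lp_norm M p f" using C0 Lp_nonneg[of M p f] by simp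
  have D: "integrable N (\<lambda>x. \<bar>h x\<bar> powr p) \<and> Lp_norm N p h \<le> 2 * C * Lp_norm M p f"
  proof (rule duality[OF hm B0])
    fix g assume g: "bdd_compact_supp M g"
    show "integrable N (\<lambda>x. h x * g x)" unfolding h_def by (rule int_Tv[OF f g])
    show "\<bar>\<integral>x. h x * g x \<partial>N\<bar> \<le> 2 * C * Lp_norm M p f * Lp_norm N (p / (p - 1)) g"
      using main_est[OF f g] unfolding P_def h_def .
  qed
  show ?thesis using D hN unfolding memLp_def h_def by simp
qed

end
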